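(* Let $m>1$ and let $B(X,Y)=\tfrac12\mathrm{tr}(XY)$ on $\mathfrak{su}(m,m-1)$. This is a multiple of the Killing form and defines a bi-invariant metric of neutral signature on $SU(m,m-1)$. There is a left-invariant hyper-paracomplex structure $(J_1,J_2,J_3)$ on $SU(m,m-1)$ for which $B$ is hyperparahermitian, such that the following holds. The left-invariant connection $\nabla$ for which all left-invariant vector fields are parallel is an HPKT connection. It is flat, and its torsion 3-form $T^\nabla(X,Y,Z)=-B([X,Y],Z)$ is closed. Consequently, for every cocompact lattice $\Gamma\subset SU(m,m-1)$, the compact manifold $SU(m,m-1)/\Gamma$ carries an invariant, flat, strong HPKT structure whose neutral metric is induced by the Killing form.
   Context: An almost hyper-paracomplex structure on a manifold is a triple $(J_1,J_2,J_3)$ of endomorphisms of the tangent bundle with $J_1^2=J_2^2=\mathrm{id}$, $J_3^2=-\mathrm{id}$ and $J_1J_2=-J_2J_1=J_3$. It is hyper-paracomplex if each $J_a$ has vanishing Nijenhuis tensor. A metric $g$ is hyperparahermitian if $g(J_1X,J_1Y)=g(J_2X,J_2Y)=-g(J_3X,J_3Y)=-g(X,Y)$. An HPKT connection is a linear connection $\nabla$ with $\nabla g=\nabla J_a=0$ ($a=1,2,3$) and totally skew-symmetric torsion, i.e. $T^\nabla(X,Y,Z):=g(T^\nabla(X,Y),Z)$ is a 3-form. The HPKT structure is strong if $dT^\nabla=0$, and flat if $\nabla$ has zero curvature. "Invariant" on $G/\Gamma$ means induced by left-invariant structures on $G$, where $\Gamma$ acts by left translations. *)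

theory Defs
  imports Complex_Main "HOL-Library.Function_Algebras"
begin

text \<open>Complex matrices of size n x n are encoded as functions nat => nat => complex
  whose entries vanish outside the index range {0..<n}. Pointwise +, -, 0 come from
  Function_Algebras.\<close>

type_synonym cmat = "nat \<Rightarrow> nat \<Rightarrow> complex"

definition mmul :: "nat \<Rightarrow> cmat \<Rightarrow> cmat \<Rightarrow> cmat" where
  "mmul n A B = (\<lambda>i j. \<Sum>k<n. A i k * B k j)"

definition mtrace :: "nat \<Rightarrow> cmat \<Rightarrow> complex" where
  "mtrace n A = (\<Sum>i<n. A i i)"

definition madj :: "cmat \<Rightarrow> cmat" where
  "madj A = (\<lambda>i j. cnj (A j i))"

definition msc :: "real \<Rightarrow> cmat \<Rightarrow> cmat" where
  "msc a A = (\<lambda>i j. complex_of_real a * A i j)"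

definition Ipq :: "nat \<Rightarrow> nat \<Rightarrow> cmat" where
  "Ipq p q = (\<lambda>i j. if i = j \<and> i < p then 1 else if i = j \<and> i < p + q then -1 else 0)"

definition su_pq :: "nat \<Rightarrow> nat \<Rightarrow> cmat set" where
  "su_pq p q = {X. (\<forall>i j. (p + q \<le> i \<or> p + q \<le> j) \<longrightarrow> X i j = 0)
      \<and> mtrace (p + q) X = 0
      \<and> mmul (p + q) (madj X) (Ipq p q) + mmul (p + q) (Ipq p q) X = 0}"

text \<open>Lie bracket of left-invariant vector fields = matrix commutator.\<close>
definition brk :: "nat \<Rightarrow> cmat \<Rightarrow> cmat \<Rightarrow> cmat" where
  "brk n X Y = mmul n X Y - mmul n Y X"

definition Bform :: "nat \<Rightarrow> cmat \<Rightarrow> cmat \<Rightarrow> complex" where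
  "Bform n X Y = mtrace n (mmul n X Y) / 2"

text \<open>Left-invariant endomorphisms of TG = real-linear endomorphisms of the Lie algebra L.\<close>
definition lin_endo :: "cmat set \<Rightarrow> (cmat \<Rightarrow> cmat) \<Rightarrow> bool" where
  "lin_endo L J \<longleftrightarrow> (\<forall>X\<in>L. J X \<in> L) \<and>
     (\<forall>X\<in>L. \<forall>Y\<in>L. \<forall>a::real. J (msc a X + Y) = msc a (J X) + J Y)"

definition nijenhuis :: "nat \<Rightarrow> (cmat \<Rightarrow> cmat) \<Rightarrow> cmat \<Rightarrow> cmat \<Rightarrow> cmat" where
  "nijenhuis n J X Y = brk n (J X) (J Y) - J (brk n (J X) Y) - J (brk n X (J Y))
      + J (J (brk n X Y))"

definition almost_hyper_paracomplex ::
  "cmat set \<Rightarrow> (cmat \<Rightarrow> cmat) \<Rightarrow> (cmat \<Rightarrow> cmat) \<Rightarrow> (cmat \<Rightarrow> cmat) \<Rightarrow> bool" where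
  "almost_hyper_paracomplex L J1 J2 J3 \<longleftrightarrow>
     lin_endo L J1 \<and> lin_endo L J2 \<and> lin_endo L J3 \<and>
     (\<forall>X\<in>L. J1 (J1 X) = X \<and> J2 (J2 X) = X \<and> J3 (J3 X) = - X \<and>
              J1 (J2 X) = J3 X \<and> J2 (J1 X) = - J3 X)"

definition hyper_paracomplex ::
  "nat \<Rightarrow> cmat set \<Rightarrow> (cmat \<Rightarrow> cmat) \<Rightarrow> (cmat \<Rightarrow> cmat) \<Rightarrow> (cmat \<Rightarrow> cmat) \<Rightarrow> bool" where
  "hyper_paracomplex n L J1 J2 J3 \<longleftrightarrow> almost_hyper_paracomplex L J1 J2 J3 \<and>
     (\<forall>J\<in>{J1, J2, J3}. \<forall>X\<in>L. \<forall>Y\<in>L. nijenhuis n J X Y = 0)"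

definition hyperparahermitian ::
  "cmat set \<Rightarrow> (cmat \<Rightarrow> cmat \<Rightarrow> complex) \<Rightarrow> (cmat \<Rightarrow> cmat) \<Rightarrow> (cmat \<Rightarrow> cmat) \<Rightarrow> (cmat \<Rightarrow> cmat) \<Rightarrow> bool" where
  "hyperparahermitian L g J1 J2 J3 \<longleftrightarrow>
     (\<forall>X\<in>L. \<forall>Y\<in>L. g (J1 X) (J1 Y) = - g X Y \<and> g (J2 X) (J2 Y) = - g X Y
                    \<and> - g (J3 X) (J3 Y) = - g X Y)"

text \<open>A left-invariant connection is determined by Nab X Y = nabla_X Y for
  left-invariant X, Y. Torsion, curvature, covariant derivatives of g and J, all on
  left-invariant fields (on which g(Y,Z) is constant).\<close>
definition torsion :: "nat \<Rightarrow> (cmat \<Rightarrow> cmat \<Rightarrow> cmat) \<Rightarrow> cmat \<Rightarrow> cmat \<Rightarrow> cmat" where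
  "torsion n Nab X Y = Nab X Y - Nab Y X - brk n X Y"

definition curvature :: "nat \<Rightarrow> (cmat \<Rightarrow> cmat \<Rightarrow> cmat) \<Rightarrow> cmat \<Rightarrow> cmat \<Rightarrow> cmat \<Rightarrow> cmat" where
  "curvature n Nab X Y Z = Nab X (Nab Y Z) - Nab Y (Nab X Z) - Nab (brk n X Y) Z"

definition torsion3 ::
  "nat \<Rightarrow> (cmat \<Rightarrow> cmat \<Rightarrow> complex) \<Rightarrow> (cmat \<Rightarrow> cmat \<Rightarrow> cmat) \<Rightarrow> cmat \<Rightarrow> cmat \<Rightarrow> cmat \<Rightarrow> complex" where
  "torsion3 n g Nab X Y Z = g (torsion n Nab X Y) Z"

text \<open>Exterior derivative of a left-invariant 3-form, evaluated on left-invariant fields.\<close>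
definition d3 :: "nat \<Rightarrow> (cmat \<Rightarrow> cmat \<Rightarrow> cmat \<Rightarrow> complex) \<Rightarrow> cmat \<Rightarrow> cmat \<Rightarrow> cmat \<Rightarrow> cmat \<Rightarrow> complex" where
  "d3 n w X0 X1 X2 X3 =
     - w (brk n X0 X1) X2 X3 + w (brk n X0 X2) X1 X3 - w (brk n X0 X3) X1 X2
     - w (brk n X1 X2) X0 X3 + w (brk n X1 X3) X0 X2 - w (brk n X2 X3) X0 X1"

definition HPKT_connection ::
  "nat \<Rightarrow> cmat set \<Rightarrow> (cmat \<Rightarrow> cmat \<Rightarrow> complex) \<Rightarrow> (cmat \<Rightarrow> cmat) \<Rightarrow> (cmat \<Rightarrow> cmat) \<Rightarrow> (cmat \<Rightarrow> cmat)
     \<Rightarrow> (cmat \<Rightarrow> cmat \<Rightarrow> cmat) \<Rightarrow> bool" where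
  "HPKT_connection n L g J1 J2 J3 Nab \<longleftrightarrow>
     (\<forall>X\<in>L. \<forall>Y\<in>L. Nab X Y \<in> L) \<and>
     (\<forall>X\<in>L. \<forall>Y\<in>L. \<forall>Z\<in>L. g (Nab X Y) Z + g Y (Nab X Z) = 0) \<and>
     (\<forall>J\<in>{J1, J2, J3}. \<forall>X\<in>L. \<forall>Y\<in>L. Nab X (J Y) - J (Nab X Y) = 0) \<and>
     (\<forall>X\<in>L. \<forall>Y\<in>L. \<forall>Z\<in>L.
        torsion3 n g Nab X Y Z = - torsion3 n g Nab Y X Z \<and>
        torsion3 n g Nab X Y Z = - torsion3 n g Nab X Z Y)"

definition flat_conn :: "nat \<Rightarrow> cmat set \<Rightarrow> (cmat \<Rightarrow> cmat \<Rightarrow> cmat) \<Rightarrow> bool" where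
  "flat_conn n L Nab \<longleftrightarrow> (\<forall>X\<in>L. \<forall>Y\<in>L. \<forall>Z\<in>L. curvature n Nab X Y Z = 0)"

end

theory Submission
  imports Defs
begin


definition supp :: "nat \<Rightarrow> cmat \<Rightarrow> bool" where
  "supp n X \<longleftrightarrow> (\<forall>i j. (n \<le> i \<or> n \<le> j) \<longrightarrow> X i j = 0)"

definition idm :: "nat \<Rightarrow> cmat" where
  "idm n = (\<lambda>i j. if i = j \<and> i < n then 1 else 0)"

definition liealg :: "nat \<Rightarrow> cmat \<Rightarrow> cmat set" where
  "liealg n S = {X. supp n X \<and> mtrace n X = 0 \<and> mmul n (madj X) S + mmul n S X = 0}"

lemma su_pq_liealg: "su_pq p q = liealg (p + q) (Ipq p q)"
  unfolding su_pq_def liealg_def supp_def by simp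

lemma cmat_eqI: "(\<And>i j. (X::cmat) i j = Y i j) \<Longrightarrow> X = Y"
  by (intro ext)

lemma supp_zero [simp]: "supp n 0" unfolding supp_def by simp

lemma mmul_assoc: "mmul n (mmul n A B) C = mmul n A (mmul n B C)"
  unfolding mmul_def
  apply (intro ext)
  apply (simp add: sum_distrib_left sum_distrib_right mult.assoc)
  apply (rule sum.swap)
  done

lemma supp_mmul: "supp n A \<Longrightarrow> supp n B \<Longrightarrow> supp n (mmul n A B)"
  unfolding supp_def mmul_def by auto

lemma supp_mmul_l: "supp n A \<Longrightarrow> (\<forall>j. n \<le> j \<longrightarrow> (\<forall>i. B i j = 0)) \<Longrightarrow> supp n (mmul n A B)"
  unfolding supp_def mmul_def by auto

lemma mmul_idm_left: "supp n X \<Longrightarrow> mmul n (idm n) X = X"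
proof (intro ext)
  fix i j assume s: "supp n X"
  have "(\<Sum>k<n. (if i = k \<and> i < n then 1 else 0) * X k j) = (\<Sum>k<n. if k = i then X i j else 0)"
    by (intro sum.cong) auto
  also have "\<dots> = X i j" using s by (auto simp: supp_def)
  finally show "mmul n (idm n) X i j = X i j" unfolding mmul_def idm_def .
qed

lemma mmul_idm_right: "supp n X \<Longrightarrow> mmul n X (idm n) = X"
proof (intro ext)
  fix i j assume s: "supp n X"
  have "(\<Sum>k<n. X i k * (if k = j \<and> k < n then 1 else 0)) = (\<Sum>k<n. if k = j then X i j else 0)"
    by (intro sum.cong) auto
  also have "\<dots> = X i j" using s by (auto simp: supp_def)
  finally show "mmul n X (idm n) i j = X i j" unfolding mmul_def idm_def .
qed

lemma madj_mmul: "madj (mmul n A B) = mmul n (madj B) (madj A)"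
  unfolding madj_def mmul_def by (intro ext) (simp add: mult.commute)

lemma madj_minus: "madj (A - B) = madj A - madj B"
  unfolding madj_def by (intro ext) simp

lemma madj_plus: "madj (A + B) = madj A + madj B"
  unfolding madj_def by (intro ext) simp

lemma madj_madj [simp]: "madj (madj A) = A"
  unfolding madj_def by (intro ext) simp

lemma supp_madj: "supp n X \<Longrightarrow> supp n (madj X)"
  unfolding supp_def madj_def by auto

lemma mmul_add_left: "mmul n (A + B) C = mmul n A C + mmul n B C"
  unfolding mmul_def by (intro ext) (simp add: distrib_right sum.distrib)

lemma mmul_add_right: "mmul n C (A + B) = mmul n C A + mmul n C B"
  unfolding mmul_def by (intro ext) (simp add: distrib_left sum.distrib)

lemma mmul_diff_left: "mmul n (A - B) C = mmul n A C - mmul n B C"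
  unfolding mmul_def by (intro ext) (simp add: left_diff_distrib sum_subtractf)

lemma mmul_diff_right: "mmul n C (A - B) = mmul n C A - mmul n C B"
  unfolding mmul_def by (intro ext) (simp add: right_diff_distrib sum_subtractf)

lemma mmul_uminus_left: "mmul n (- A) C = - mmul n A C"
  unfolding mmul_def by (intro ext) (simp add: sum_negf)

lemma mmul_uminus_right: "mmul n C (- A) = - mmul n C A"
  unfolding mmul_def by (intro ext) (simp add: sum_negf)

lemma mmul_zero_left [simp]: "mmul n 0 C = 0"
  unfolding mmul_def by (intro ext) simp

lemma mmul_zero_right [simp]: "mmul n C 0 = 0"
  unfolding mmul_def by (intro ext) simp

lemma mmul_msc_left: "mmul n (msc a A) C = msc a (mmul n A C)"
  unfolding mmul_def msc_def by (intro ext) (simp add: sum_distrib_left mult.assoc)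

lemma mmul_msc_right: "mmul n C (msc a A) = msc a (mmul n C A)"
  unfolding mmul_def msc_def by (intro ext) (simp add: sum_distrib_left mult.left_commute)

lemma mtrace_comm: "mtrace n (mmul n A B) = mtrace n (mmul n B A)"
  unfolding mtrace_def mmul_def
  by (subst sum.swap) (simp add: mult.commute)

lemma mtrace_add: "mtrace n (A + B) = mtrace n A + mtrace n B"
  unfolding mtrace_def by (simp add: sum.distrib)

lemma mtrace_diff: "mtrace n (A - B) = mtrace n A - mtrace n B"
  unfolding mtrace_def by (simp add: sum_subtractf)

lemma mtrace_uminus: "mtrace n (- A) = - mtrace n A"
  unfolding mtrace_def by (simp add: sum_negf)

lemma mtrace_msc: "mtrace n (msc a A) = complex_of_real a * mtrace n A"
  unfolding mtrace_def msc_def by (simp add: sum_distrib_left)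

lemma mtrace_zero [simp]: "mtrace n 0 = 0"
  unfolding mtrace_def by simp

lemma madj_msc: "madj (msc a A) = msc a (madj A)"
  unfolding madj_def msc_def by (intro ext) simp

lemma madj_zero [simp]: "madj 0 = 0"
  unfolding madj_def by (intro ext) simp

lemmas mmul_lin = mmul_add_left mmul_add_right mmul_diff_left mmul_diff_right
  mmul_uminus_left mmul_uminus_right mmul_msc_left mmul_msc_right

lemma brk_antisym: "brk n X Y = - brk n Y X"
  unfolding brk_def by simp

lemma brk_add_left: "brk n (A + B) C = brk n A C + brk n B C"
  unfolding brk_def by (simp add: mmul_lin algebra_simps)

lemma brk_add_right: "brk n C (A + B) = brk n C A + brk n C B"
  unfolding brk_def by (simp add: mmul_lin algebra_simps)

lemma brk_diff_left: "brk n (A - B) C = brk n A C - brk n B C"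
  unfolding brk_def by (simp add: mmul_lin algebra_simps)

lemma brk_diff_right: "brk n C (A - B) = brk n C A - brk n C B"
  unfolding brk_def by (simp add: mmul_lin algebra_simps)

lemma brk_uminus_left: "brk n (- A) C = - brk n A C"
  unfolding brk_def by (simp add: mmul_lin algebra_simps)

lemma brk_uminus_right: "brk n C (- A) = - brk n C A"
  unfolding brk_def by (simp add: mmul_lin algebra_simps)

lemma msc_diff: "msc a (A - B) = msc a A - msc a B"
  unfolding msc_def by (intro ext) (simp add: algebra_simps)

lemma brk_msc_left: "brk n (msc a A) C = msc a (brk n A C)"
  unfolding brk_def by (simp add: mmul_lin msc_diff)

lemma brk_msc_right: "brk n C (msc a A) = msc a (brk n C A)"
  unfolding brk_def by (simp add: mmul_lin msc_diff)

lemma brk_zero_left [simp]: "brk n 0 C = 0" unfolding brk_def by simp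
lemma brk_zero_right [simp]: "brk n C 0 = 0" unfolding brk_def by simp

lemmas brk_lin = brk_add_left brk_add_right brk_diff_left brk_diff_right
  brk_uminus_left brk_uminus_right brk_msc_left brk_msc_right

lemma Bform_brk_inv:
  "Bform n (brk n X Y) Z = - Bform n Y (brk n X Z)"
proof -
  have "mtrace n (mmul n (mmul n X Y) Z) = mtrace n (mmul n Y (mmul n Z X))"
    by (metis mmul_assoc mtrace_comm)
  then show ?thesis
    unfolding Bform_def brk_def
    by (simp add: mmul_lin mtrace_diff mmul_assoc field_simps)
qed

lemma Bform_sym: "Bform n X Y = Bform n Y X"
  unfolding Bform_def by (simp add: mtrace_comm)

lemma Bform_brk_skew: "Bform n (brk n X Y) Z = - Bform n (brk n Y X) Z"
  unfolding Bform_def brk_def by (simp add: mmul_lin mtrace_diff field_simps)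

lemma liealg_supp: "X \<in> liealg n S \<Longrightarrow> supp n X" unfolding liealg_def by simp

lemma liealg_brk:
  assumes "X \<in> liealg n S" "Y \<in> liealg n S"
  shows "brk n X Y \<in> liealg n S"
proof -
  have sx: "supp n X" and sy: "supp n Y" using assms unfolding liealg_def by auto
  have hx: "mmul n (madj X) S = - mmul n S X" using assms(1) unfolding liealg_def
    by (simp add: eq_neg_iff_add_eq_0)
  have hy: "mmul n (madj Y) S = - mmul n S Y" using assms(2) unfolding liealg_def
    by (simp add: eq_neg_iff_add_eq_0)
  have e1: "mmul n (madj (mmul n X Y)) S = mmul n S (mmul n Y X)"
  proof -
    have "mmul n (madj (mmul n X Y)) S = mmul n (madj Y) (mmul n (madj X) S)"
      by (simp add: madj_mmul mmul_assoc)
    also have "\<dots> = - mmul n (mmul n (madj Y) S) X" by (simp add: hx mmul_lin mmul_assoc)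
    also have "\<dots> = mmul n S (mmul n Y X)" by (simp add: hy mmul_lin mmul_assoc)
    finally show ?thesis .
  qed
  have e2: "mmul n (madj (mmul n Y X)) S = mmul n S (mmul n X Y)"
  proof -
    have "mmul n (madj (mmul n Y X)) S = mmul n (madj X) (mmul n (madj Y) S)"
      by (simp add: madj_mmul mmul_assoc)
    also have "\<dots> = - mmul n (mmul n (madj X) S) Y" by (simp add: hy mmul_lin mmul_assoc)
    also have "\<dots> = mmul n S (mmul n X Y)" by (simp add: hx mmul_lin mmul_assoc)
    finally show ?thesis .
  qed
  have "mmul n (madj (brk n X Y)) S + mmul n S (brk n X Y) = 0"
    unfolding brk_def by (simp add: madj_minus mmul_lin e1 e2)
  moreover have "mtrace n (brk n X Y) = 0"
    unfolding brk_def by (simp add: mtrace_diff mtrace_comm)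
  moreover have "supp n (brk n X Y)"
    unfolding brk_def using supp_mmul[OF sx sy] supp_mmul[OF sy sx]
    by (simp add: supp_def)
  ultimately show ?thesis unfolding liealg_def by simp
qed


lemma msc_one [simp]: "msc 1 X = X" unfolding msc_def by simp
lemma msc_zero_mat [simp]: "msc a 0 = 0" unfolding msc_def by (intro ext) simp
lemma msc_add: "msc a (X + Y) = msc a X + msc a Y"
  unfolding msc_def by (intro ext) (simp add: algebra_simps)
lemma msc_uminus: "msc a (- X) = - msc a X"
  unfolding msc_def by (intro ext) simp
lemma msc_msc: "msc a (msc b X) = msc (a * b) X"
  unfolding msc_def by (intro ext) simp
lemma msc_minus_one: "msc (-1) X = - X"
  unfolding msc_def by (intro ext) simp
lemma msc_apply: "msc a X i j = complex_of_real a * X i j" unfolding msc_def by simp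

lemma supp_add: "supp n X \<Longrightarrow> supp n Y \<Longrightarrow> supp n (X + Y)" unfolding supp_def by simp
lemma supp_diff: "supp n X \<Longrightarrow> supp n Y \<Longrightarrow> supp n (X - Y)" unfolding supp_def by simp
lemma supp_uminus: "supp n X \<Longrightarrow> supp n (- X)" unfolding supp_def by simp
lemma supp_msc: "supp n X \<Longrightarrow> supp n (msc a X)" unfolding supp_def msc_def by simp

lemma liealg_zero: "0 \<in> liealg n S" unfolding liealg_def by (simp add: madj_def zero_fun_def[symmetric])

lemma madj_uminus: "madj (- A) = - madj A"
  unfolding madj_def by (intro ext) simp

lemma liealg_add: "X \<in> liealg n S \<Longrightarrow> Y \<in> liealg n S \<Longrightarrow> X + Y \<in> liealg n S"
proof -
  assume x: "X \<in> liealg n S" and y: "Y \<in> liealg n S"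
  have "mmul n (madj (X + Y)) S + mmul n S (X + Y) =
     (mmul n (madj X) S + mmul n S X) + (mmul n (madj Y) S + mmul n S Y)"
    by (simp add: madj_plus mmul_add_left mmul_add_right add_ac)
  then show ?thesis using x y unfolding liealg_def by (simp add: supp_add mtrace_add)
qed

lemma liealg_uminus: "X \<in> liealg n S \<Longrightarrow> - X \<in> liealg n S"
proof -
  assume x: "X \<in> liealg n S"
  have "mmul n (madj (- X)) S + mmul n S (- X) = - (mmul n (madj X) S + mmul n S X)"
    by (simp add: madj_uminus mmul_uminus_left mmul_uminus_right)
  also have "\<dots> = 0" using x unfolding liealg_def by simp
  finally show ?thesis using x unfolding liealg_def by (simp add: supp_uminus mtrace_uminus)
qed

lemma liealg_diff: "X \<in> liealg n S \<Longrightarrow> Y \<in> liealg n S \<Longrightarrow> X - Y \<in> liealg n S"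
  using liealg_add[of X n S "- Y"] liealg_uminus[of Y n S] by simp

lemma liealg_msc: "X \<in> liealg n S \<Longrightarrow> msc a X \<in> liealg n S"
  unfolding liealg_def
  by (auto simp: supp_msc mtrace_msc madj_msc mmul_lin simp flip: msc_add)

lemma liealg_lincomb: "X \<in> liealg n S \<Longrightarrow> Y \<in> liealg n S \<Longrightarrow> msc a X + Y \<in> liealg n S"
  by (simp add: liealg_add liealg_msc)

context
  fixes L :: "cmat set" and J :: "cmat \<Rightarrow> cmat" and n S
  assumes LL: "L = liealg n S" and lin: "lin_endo L J"
begin

lemma le_in: "X \<in> L \<Longrightarrow> J X \<in> L" using lin unfolding lin_endo_def by blast

lemma le_add: "X \<in> L \<Longrightarrow> Y \<in> L \<Longrightarrow> J (X + Y) = J X + J Y"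
  using lin unfolding lin_endo_def by (metis msc_one)

lemma le_zero: "J 0 = 0"
proof -
  have z: "0 \<in> L" using LL liealg_zero by simp
  have "J (0 + 0) = J 0 + J 0" using le_add[OF z z] .
  then show ?thesis by simp
qed

lemma le_msc: "X \<in> L \<Longrightarrow> J (msc a X) = msc a (J X)"
proof -
  assume x: "X \<in> L"
  have z: "0 \<in> L" using LL liealg_zero by simp
  have "J (msc a X + 0) = msc a (J X) + J 0" using lin x z unfolding lin_endo_def by blast
  then show ?thesis using le_zero by simp
qed

lemma le_uminus: "X \<in> L \<Longrightarrow> J (- X) = - J X"
  using le_msc[of X "-1"] by (simp add: msc_minus_one)

lemma le_diff: "X \<in> L \<Longrightarrow> Y \<in> L \<Longrightarrow> J (X - Y) = J X - J Y"
proof -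
  assume x: "X \<in> L" and y: "Y \<in> L"
  have my: "- Y \<in> L" using y LL liealg_uminus by simp
  have "J (X + - Y) = J X + J (- Y)" using le_add[OF x my] .
  then show ?thesis using le_uminus[OF y] by simp
qed

end

section \<open>Eigenspace criterion for integrability of product structures\<close>

lemma nij_add_left:
  assumes LL: "L = liealg n S" and lin: "lin_endo L J"
    and x1: "X1 \<in> L" and x2: "X2 \<in> L" and y: "Y \<in> L"
  shows "nijenhuis n J (X1 + X2) Y = nijenhuis n J X1 Y + nijenhuis n J X2 Y"
proof -
  note cl = liealg_brk[of _ n S, folded LL]
  have j1: "J X1 \<in> L" "J X2 \<in> L" "J Y \<in> L" using le_in[OF LL lin] x1 x2 y by auto
  have jadd: "J (X1 + X2) = J X1 + J X2" using le_add[OF LL lin x1 x2] .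
  have b1: "brk n (J X1) Y \<in> L" "brk n (J X2) Y \<in> L" "brk n X1 (J Y) \<in> L" "brk n X2 (J Y) \<in> L"
    "brk n X1 Y \<in> L" "brk n X2 Y \<in> L"
    using cl j1 x1 x2 y by auto
  have b2: "J (brk n X1 Y) \<in> L" "J (brk n X2 Y) \<in> L" using le_in[OF LL lin] b1 by auto
  show ?thesis
    unfolding nijenhuis_def jadd
    by (simp add: brk_lin le_add[OF LL lin] b1 b2 algebra_simps)
qed

lemma nij_add_right:
  assumes LL: "L = liealg n S" and lin: "lin_endo L J"
    and x: "X \<in> L" and y1: "Y1 \<in> L" and y2: "Y2 \<in> L"
  shows "nijenhuis n J X (Y1 + Y2) = nijenhuis n J X Y1 + nijenhuis n J X Y2"
proof -
  note cl = liealg_brk[of _ n S, folded LL]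
  have j1: "J Y1 \<in> L" "J Y2 \<in> L" "J X \<in> L" using le_in[OF LL lin] x y1 y2 by auto
  have jadd: "J (Y1 + Y2) = J Y1 + J Y2" using le_add[OF LL lin y1 y2] .
  have b1: "brk n (J X) Y1 \<in> L" "brk n (J X) Y2 \<in> L" "brk n X (J Y1) \<in> L" "brk n X (J Y2) \<in> L"
    "brk n X Y1 \<in> L" "brk n X Y2 \<in> L"
    using cl j1 x y1 y2 by auto
  have b2: "J (brk n X Y1) \<in> L" "J (brk n X Y2) \<in> L" using le_in[OF LL lin] b1 by auto
  show ?thesis
    unfolding nijenhuis_def jadd
    by (simp add: brk_lin le_add[OF LL lin] b1 b2 algebra_simps)
qed

lemma para_integrable:
  assumes LL: "L = liealg n S" and lin: "lin_endo L J"
    and sq: "\<And>X. X \<in> L \<Longrightarrow> J (J X) = X"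
    and plus: "\<And>X Y. X \<in> L \<Longrightarrow> Y \<in> L \<Longrightarrow> J X = X \<Longrightarrow> J Y = Y \<Longrightarrow> J (brk n X Y) = brk n X Y"
    and minus: "\<And>X Y. X \<in> L \<Longrightarrow> Y \<in> L \<Longrightarrow> J X = - X \<Longrightarrow> J Y = - Y \<Longrightarrow> J (brk n X Y) = - brk n X Y"
    and x: "X \<in> L" and y: "Y \<in> L"
  shows "nijenhuis n J X Y = 0"
proof -
  note cl = liealg_brk[of _ n S, folded LL]
  note inL = le_in[OF LL lin]
  have lc: "\<And>A B. A \<in> L \<Longrightarrow> B \<in> L \<Longrightarrow> A + B \<in> L" "\<And>A B. A \<in> L \<Longrightarrow> B \<in> L \<Longrightarrow> A - B \<in> L"
    "\<And>A a. A \<in> L \<Longrightarrow> msc a A \<in> L" "\<And>A. A \<in> L \<Longrightarrow> - A \<in> L"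
    using LL liealg_add liealg_diff liealg_msc liealg_uminus by auto
  define Xp where "Xp = msc (1/2) (X + J X)"
  define Xm where "Xm = msc (1/2) (X - J X)"
  define Yp where "Yp = msc (1/2) (Y + J Y)"
  define Ym where "Ym = msc (1/2) (Y - J Y)"
  have mem: "Xp \<in> L" "Xm \<in> L" "Yp \<in> L" "Ym \<in> L"
    unfolding Xp_def Xm_def Yp_def Ym_def using lc inL x y by auto
  have jp: "\<And>Z. Z \<in> L \<Longrightarrow> J (msc (1/2) (Z + J Z)) = msc (1/2) (Z + J Z)"
    using lc inL sq by (simp add: le_msc[OF LL lin] le_add[OF LL lin] add.commute)
  have jm: "\<And>Z. Z \<in> L \<Longrightarrow> J (msc (1/2) (Z - J Z)) = - msc (1/2) (Z - J Z)"
    using lc inL sq by (simp add: le_msc[OF LL lin] le_diff[OF LL lin] flip: msc_uminus)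
  have dec: "\<And>Z. msc (1/2) (Z + J Z) + msc (1/2) (Z - J Z) = Z"
    unfolding msc_def by (intro ext) (simp add: field_simps)
  have X: "X = Xp + Xm" and Y: "Y = Yp + Ym" unfolding Xp_def Xm_def Yp_def Ym_def using dec by auto
  have JXp: "J Xp = Xp" and JXm: "J Xm = - Xm" and JYp: "J Yp = Yp" and JYm: "J Ym = - Ym"
    unfolding Xp_def Xm_def Yp_def Ym_def using jp jm x y by auto
  have n1: "nijenhuis n J A B = 0" if a: "A \<in> L" "J A = A" and b: "B \<in> L" "J B = B" for A B
    unfolding nijenhuis_def using plus[OF a(1) b(1) a(2) b(2)] a b by simp
  have n2: "nijenhuis n J A B = 0" if a: "A \<in> L" "J A = - A" and b: "B \<in> L" "J B = - B" for A B
  proof -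
    have z: "brk n A B \<in> L" using cl a b by auto
    have "J (brk n A B) = - brk n A B" using minus[OF a(1) b(1) a(2) b(2)] .
    then show ?thesis unfolding nijenhuis_def using a b z
      by (simp add: brk_lin le_uminus[OF LL lin])
  qed
  have n3: "nijenhuis n J A B = 0" if a: "A \<in> L" "J A = A" and b: "B \<in> L" "J B = - B" for A B
  proof -
    have z: "brk n A B \<in> L" using cl a b by auto
    show ?thesis unfolding nijenhuis_def using a b z sq[OF z]
      by (simp add: brk_lin le_uminus[OF LL lin])
  qed
  have n4: "nijenhuis n J A B = 0" if a: "A \<in> L" "J A = - A" and b: "B \<in> L" "J B = B" for A B
  proof -
    have z: "brk n A B \<in> L" using cl a b by auto
    show ?thesis unfolding nijenhuis_def using a b z sq[OF z]
      by (simp add: brk_lin le_uminus[OF LL lin])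
  qed
  have "nijenhuis n J X Y = nijenhuis n J Xp Yp + nijenhuis n J Xp Ym + (nijenhuis n J Xm Yp + nijenhuis n J Xm Ym)"
    unfolding X Y
    by (simp add: nij_add_left[OF LL lin] nij_add_right[OF LL lin] mem lc)
  then show ?thesis
    using n1[OF mem(1) JXp mem(3) JYp] n2[OF mem(2) JXm mem(4) JYm]
      n3[OF mem(1) JXp mem(4) JYm] n4[OF mem(2) JXm mem(3) JYp] by simp
qed


section \<open>Integrability of the third structure\<close>

lemma third_integrable:
  assumes LL: "L = liealg n S" and linA: "lin_endo L A" and linB: "lin_endo L B"
    and sqA: "\<And>X. X \<in> L \<Longrightarrow> A (A X) = X" and sqB: "\<And>X. X \<in> L \<Longrightarrow> B (B X) = X"
    and ac: "\<And>X. X \<in> L \<Longrightarrow> B (A X) = - A (B X)"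
    and nA: "\<And>X Y. X \<in> L \<Longrightarrow> Y \<in> L \<Longrightarrow> nijenhuis n A X Y = 0"
    and nB: "\<And>X Y. X \<in> L \<Longrightarrow> Y \<in> L \<Longrightarrow> nijenhuis n B X Y = 0"
    and x: "X \<in> L" and y: "Y \<in> L"
  shows "nijenhuis n (\<lambda>Z. A (B Z)) X Y = 0"
proof -
  have inA: "\<And>U. U \<in> L \<Longrightarrow> A U \<in> L" using le_in[OF LL linA] .
  have inB: "\<And>U. U \<in> L \<Longrightarrow> B U \<in> L" using le_in[OF LL linB] .
  have inbr: "\<And>U V. U \<in> L \<Longrightarrow> V \<in> L \<Longrightarrow> brk n U V \<in> L" using LL liealg_brk by auto
  have inneg: "\<And>U. U \<in> L \<Longrightarrow> - U \<in> L" using LL liealg_uminus by auto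
  have indiff: "\<And>U V. U \<in> L \<Longrightarrow> V \<in> L \<Longrightarrow> U - V \<in> L" using LL liealg_diff by auto
  have inadd: "\<And>U V. U \<in> L \<Longrightarrow> V \<in> L \<Longrightarrow> U + V \<in> L" using LL liealg_add by auto
  note Alin = le_add[OF LL linA] le_diff[OF LL linA] le_uminus[OF LL linA]
  note Blin = le_add[OF LL linB] le_diff[OF LL linB] le_uminus[OF LL linB]
  note rules = inA inB inbr inneg indiff inadd Alin Blin sqA sqB ac x y brk_uminus_left brk_uminus_right
  have E1: "brk n (A X) (A Y) - A (brk n (A X) Y) - A (brk n X (A Y)) + brk n X Y = 0"
    using nA[OF x y] unfolding nijenhuis_def by (simp add: rules)
  have E2: "brk n (A (B X)) (A (B Y)) - A (brk n (A (B X)) (B Y)) - A (brk n (B X) (A (B Y))) + brk n (B X) (B Y) = 0"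
    using nA[OF inB[OF x] inB[OF y]] unfolding nijenhuis_def by (simp add: rules)
  have E3: "B (brk n (A X) (A (B Y))) + A (B (brk n (A X) (B Y))) + A (B (brk n X (A (B Y)))) + B (brk n X (B Y)) = 0"
  proof -
    have "B (nijenhuis n A X (B Y)) = 0" using nA[OF x inB[OF y]] le_zero[OF LL linB] by simp
    then show ?thesis unfolding nijenhuis_def by (simp add: rules)
  qed
  have E4: "B (brk n (A (B X)) (A Y)) + A (B (brk n (A (B X)) Y)) + A (B (brk n (B X) (A Y))) + B (brk n (B X) Y) = 0"
  proof -
    have "B (nijenhuis n A (B X) Y) = 0" using nA[OF inB[OF x] y] le_zero[OF LL linB] by simp
    then show ?thesis unfolding nijenhuis_def by (simp add: rules)
  qed
  have E5: "brk n (B X) (B Y) - B (brk n (B X) Y) - B (brk n X (B Y)) + brk n X Y = 0"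
    using nB[OF x y] unfolding nijenhuis_def by (simp add: rules)
  have E6: "brk n (A (B X)) (A (B Y)) + B (brk n (A (B X)) (A Y)) + B (brk n (A X) (A (B Y))) + brk n (A X) (A Y) = 0"
    using nB[OF inA[OF x] inA[OF y]] unfolding nijenhuis_def by (simp add: rules)
  have E7: "- A (brk n (B X) (A (B Y))) - A (B (brk n (B X) (A Y))) + A (B (brk n X (A (B Y)))) + A (brk n X (A Y)) = 0"
  proof -
    have "A (nijenhuis n B X (A Y)) = 0" using nB[OF x inA[OF y]] le_zero[OF LL linA] by simp
    then show ?thesis unfolding nijenhuis_def by (simp add: rules)
  qed
  have E8: "- A (brk n (A (B X)) (B Y)) + A (B (brk n (A (B X)) Y)) - A (B (brk n (A X) (B Y))) + A (brk n (A X) Y) = 0"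
  proof -
    have "A (nijenhuis n B (A X) Y) = 0" using nB[OF inA[OF x] y] le_zero[OF LL linA] by simp
    then show ?thesis unfolding nijenhuis_def by (simp add: rules)
  qed
  have NC: "nijenhuis n (\<lambda>Z. A (B Z)) X Y = brk n (A (B X)) (A (B Y)) - A (B (brk n (A (B X)) Y))
      - A (B (brk n X (A (B Y)))) - brk n X Y"
  proof -
    have "A (B (A (B (brk n X Y)))) = - brk n X Y" using rules by simp
    then show ?thesis unfolding nijenhuis_def by simp
  qed
  have "nijenhuis n (\<lambda>Z. A (B Z)) X Y + nijenhuis n (\<lambda>Z. A (B Z)) X Y =
     - (brk n (A X) (A Y) - A (brk n (A X) Y) - A (brk n X (A Y)) + brk n X Y)
     + (brk n (A (B X)) (A (B Y)) - A (brk n (A (B X)) (B Y)) - A (brk n (B X) (A (B Y))) + brk n (B X) (B Y))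
     - (B (brk n (A X) (A (B Y))) + A (B (brk n (A X) (B Y))) + A (B (brk n X (A (B Y)))) + B (brk n X (B Y)))
     - (B (brk n (A (B X)) (A Y)) + A (B (brk n (A (B X)) Y)) + A (B (brk n (B X) (A Y))) + B (brk n (B X) Y))
     - (brk n (B X) (B Y) - B (brk n (B X) Y) - B (brk n X (B Y)) + brk n X Y)
     + (brk n (A (B X)) (A (B Y)) + B (brk n (A (B X)) (A Y)) + B (brk n (A X) (A (B Y))) + brk n (A X) (A Y))
     - (- A (brk n (B X) (A (B Y))) - A (B (brk n (B X) (A Y))) + A (B (brk n X (A (B Y)))) + A (brk n X (A Y)))
     - (- A (brk n (A (B X)) (B Y)) + A (B (brk n (A (B X)) Y)) - A (B (brk n (A X) (B Y))) + A (brk n (A X) Y))"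
    unfolding NC by (simp add: algebra_simps)
  also have "\<dots> = 0" unfolding E1 E2 E3 E4 E5 E6 E7 E8 by simp
  finally have h: "nijenhuis n (\<lambda>Z. A (B Z)) X Y + nijenhuis n (\<lambda>Z. A (B Z)) X Y = 0" .
  show ?thesis
  proof (rule cmat_eqI)
    fix i j
    have "nijenhuis n (\<lambda>Z. A (B Z)) X Y i j + nijenhuis n (\<lambda>Z. A (B Z)) X Y i j = 0"
      using fun_cong[OF fun_cong[OF h, of i], of j] by simp
    then show "nijenhuis n (\<lambda>Z. A (B Z)) X Y i j = 0 i j" by simp
  qed
qed


section \<open>Transport along conjugation\<close>

definition adq :: "nat \<Rightarrow> cmat \<Rightarrow> cmat \<Rightarrow> cmat \<Rightarrow> cmat" where
  "adq n Q Q' X = mmul n (mmul n Q X) Q'"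

definition gpair :: "nat \<Rightarrow> cmat \<Rightarrow> cmat \<Rightarrow> bool" where
  "gpair n Q Q' \<longleftrightarrow> supp n Q \<and> supp n Q' \<and> mmul n Q Q' = idm n \<and> mmul n Q' Q = idm n"

lemma gpair_sym: "gpair n Q Q' \<Longrightarrow> gpair n Q' Q" unfolding gpair_def by auto

lemma supp_adq: "gpair n Q Q' \<Longrightarrow> supp n (adq n Q Q' X)"
  unfolding gpair_def adq_def supp_def mmul_def by auto

lemma adq_inv: "gpair n Q Q' \<Longrightarrow> supp n X \<Longrightarrow> adq n Q' Q (adq n Q Q' X) = X"
  unfolding adq_def gpair_def
  by (simp add: mmul_assoc mmul_idm_left mmul_idm_right supp_mmul flip: mmul_assoc[of n Q' Q])

lemma adq_brk: "gpair n Q Q' \<Longrightarrow> supp n X \<Longrightarrow> supp n Y \<Longrightarrow>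
    adq n Q Q' (brk n X Y) = brk n (adq n Q Q' X) (adq n Q Q' Y)"
proof -
  assume g: "gpair n Q Q'" and sx: "supp n X" and sy: "supp n Y"
  have key: "mmul n (mmul n (mmul n Q A) Q') (mmul n (mmul n Q B) Q') = mmul n (mmul n Q (mmul n A B)) Q'"
    if sa: "supp n A" for A B
  proof -
    have "mmul n (mmul n (mmul n Q A) Q') (mmul n (mmul n Q B) Q') = mmul n Q (mmul n A (mmul n (mmul n Q' Q) (mmul n B Q')))"
      by (simp add: mmul_assoc)
    also have "\<dots> = mmul n Q (mmul n (mmul n A (idm n)) (mmul n B Q'))" using g unfolding gpair_def by (simp add: mmul_assoc)
    also have "\<dots> = mmul n (mmul n Q (mmul n A B)) Q'" using sa by (simp add: mmul_idm_right mmul_assoc)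
    finally show "mmul n (mmul n (mmul n Q A) Q') (mmul n (mmul n Q B) Q') = mmul n (mmul n Q (mmul n A B)) Q'" .
  qed
  show ?thesis unfolding adq_def brk_def using sx sy by (simp add: mmul_lin key)
qed

lemma adq_Bform: "gpair n Q Q' \<Longrightarrow> supp n X \<Longrightarrow> supp n Y \<Longrightarrow>
    Bform n (adq n Q Q' X) (adq n Q Q' Y) = Bform n X Y"
proof -
  assume g: "gpair n Q Q'" and sx: "supp n X" and sy: "supp n Y"
  have "mmul n (adq n Q Q' X) (adq n Q Q' Y) = adq n Q Q' (mmul n X Y)"
  proof -
    have "mmul n (adq n Q Q' X) (adq n Q Q' Y) = mmul n Q (mmul n X (mmul n (mmul n Q' Q) (mmul n Y Q')))"
      unfolding adq_def by (simp add: mmul_assoc)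
    also have "\<dots> = mmul n Q (mmul n (mmul n X (idm n)) (mmul n Y Q'))" using g unfolding gpair_def by (simp add: mmul_assoc)
    also have "\<dots> = adq n Q Q' (mmul n X Y)" using sx unfolding adq_def by (simp add: mmul_idm_right mmul_assoc)
    finally show ?thesis .
  qed
  moreover have "mtrace n (adq n Q Q' Z) = mtrace n Z" if "supp n Z" for Z
  proof -
    have "mtrace n (adq n Q Q' Z) = mtrace n (mmul n (mmul n Q' Q) Z)"
      unfolding adq_def by (metis mmul_assoc mtrace_comm)
    also have "\<dots> = mtrace n Z" using g that unfolding gpair_def by (simp add: mmul_idm_left)
    finally show ?thesis .
  qed
  ultimately show ?thesis unfolding Bform_def using supp_mmul[OF sx sy] by simp
qed

lemma adq_add: "adq n Q Q' (X + Y) = adq n Q Q' X + adq n Q Q' Y"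
  unfolding adq_def by (simp add: mmul_lin)
lemma adq_diff: "adq n Q Q' (X - Y) = adq n Q Q' X - adq n Q Q' Y"
  unfolding adq_def by (simp add: mmul_lin)
lemma adq_uminus: "adq n Q Q' (- X) = - adq n Q Q' X"
  unfolding adq_def by (simp add: mmul_lin)
lemma adq_msc: "adq n Q Q' (msc a X) = msc a (adq n Q Q' X)"
  unfolding adq_def by (simp add: mmul_lin)
lemma adq_zero [simp]: "adq n Q Q' 0 = 0"
  unfolding adq_def by simp

definition trp :: "nat \<Rightarrow> cmat \<Rightarrow> cmat \<Rightarrow> (cmat \<Rightarrow> cmat) \<Rightarrow> cmat \<Rightarrow> cmat" where
  "trp n Q Q' J = (\<lambda>X. adq n Q Q' (J (adq n Q' Q X)))"

locale transp =
  fixes n :: nat and Q Q' S1 S2 :: cmat and L1 L2 :: "cmat set"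
  assumes g: "gpair n Q Q'"
    and L1: "L1 = liealg n S1" and L2: "L2 = liealg n S2"
    and to2: "\<And>X. X \<in> L1 \<Longrightarrow> adq n Q Q' X \<in> L2"
    and to1: "\<And>X. X \<in> L2 \<Longrightarrow> adq n Q' Q X \<in> L1"
begin

lemma g': "gpair n Q' Q" using gpair_sym[OF g] .

lemma s1: "X \<in> L1 \<Longrightarrow> supp n X" using L1 liealg_supp by blast
lemma s2: "X \<in> L2 \<Longrightarrow> supp n X" using L2 liealg_supp by blast

lemma backq: "X \<in> L2 \<Longrightarrow> adq n Q Q' (adq n Q' Q X) = X"
  using adq_inv[OF g' s2] by blast

lemma backq1: "X \<in> L1 \<Longrightarrow> adq n Q' Q (adq n Q Q' X) = X"
  using adq_inv[OF g s1] by blast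

lemma tr_lin: "lin_endo L1 J \<Longrightarrow> lin_endo L2 (trp n Q Q' J)"
proof -
  assume lin: "lin_endo L1 J"
  show ?thesis unfolding lin_endo_def trp_def
  proof (intro conjI ballI allI)
    fix X assume "X \<in> L2"
    then show "adq n Q Q' (J (adq n Q' Q X)) \<in> L2" using to1 to2 le_in[OF L1 lin] by blast
  next
    fix X Y a assume x: "X \<in> L2" and y: "Y \<in> L2"
    have "J (adq n Q' Q (msc a X + Y)) = J (msc a (adq n Q' Q X) + adq n Q' Q Y)"
      by (simp add: adq_add adq_msc)
    also have "\<dots> = msc a (J (adq n Q' Q X)) + J (adq n Q' Q Y)"
      using lin to1[OF x] to1[OF y] unfolding lin_endo_def by blast
    finally show "adq n Q Q' (J (adq n Q' Q (msc a X + Y))) =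
        msc a (adq n Q Q' (J (adq n Q' Q X))) + adq n Q Q' (J (adq n Q' Q Y))"
      by (simp add: adq_add adq_msc)
  qed
qed

lemma tr_comp: "lin_endo L1 K \<Longrightarrow> X \<in> L2 \<Longrightarrow>
   trp n Q Q' J (trp n Q Q' K X) = adq n Q Q' (J (K (adq n Q' Q X)))"
  unfolding trp_def using backq1 le_in[OF L1] to1 by (metis (no_types, lifting) L1)

lemma tr_iso: "lin_endo L1 J \<Longrightarrow> (\<And>X Y. X \<in> L1 \<Longrightarrow> Y \<in> L1 \<Longrightarrow> Bform n (J X) (J Y) = c * Bform n X Y)
   \<Longrightarrow> X \<in> L2 \<Longrightarrow> Y \<in> L2 \<Longrightarrow> Bform n (trp n Q Q' J X) (trp n Q Q' J Y) = c * Bform n X Y"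
proof -
  assume lin: "lin_endo L1 J" and iso: "\<And>X Y. X \<in> L1 \<Longrightarrow> Y \<in> L1 \<Longrightarrow> Bform n (J X) (J Y) = c * Bform n X Y"
    and x: "X \<in> L2" and y: "Y \<in> L2"
  have "Bform n (trp n Q Q' J X) (trp n Q Q' J Y) = Bform n (J (adq n Q' Q X)) (J (adq n Q' Q Y))"
    unfolding trp_def using adq_Bform[OF g] s1 le_in[OF L1 lin] to1 x y by blast
  also have "\<dots> = c * Bform n (adq n Q' Q X) (adq n Q' Q Y)" using iso to1 x y by blast
  also have "\<dots> = c * Bform n X Y" using adq_Bform[OF g'] s2 x y by simp
  finally show ?thesis .
qed

lemma tr_nij: "lin_endo L1 J \<Longrightarrow> (\<And>X Y. X \<in> L1 \<Longrightarrow> Y \<in> L1 \<Longrightarrow> nijenhuis n J X Y = 0)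
   \<Longrightarrow> X \<in> L2 \<Longrightarrow> Y \<in> L2 \<Longrightarrow> nijenhuis n (trp n Q Q' J) X Y = 0"
proof -
  assume lin: "lin_endo L1 J" and nj: "\<And>X Y. X \<in> L1 \<Longrightarrow> Y \<in> L1 \<Longrightarrow> nijenhuis n J X Y = 0"
    and x: "X \<in> L2" and y: "Y \<in> L2"
  define X' where "X' = adq n Q' Q X"
  define Y' where "Y' = adq n Q' Q Y"
  have x': "X' \<in> L1" and y': "Y' \<in> L1" unfolding X'_def Y'_def using to1 x y by auto
  have X: "X = adq n Q Q' X'" and Y: "Y = adq n Q Q' Y'" unfolding X'_def Y'_def using backq x y by auto
  have inJ: "\<And>U. U \<in> L1 \<Longrightarrow> J U \<in> L1" using le_in[OF L1 lin] .
  have inb: "\<And>U V. U \<in> L1 \<Longrightarrow> V \<in> L1 \<Longrightarrow> brk n U V \<in> L1" using L1 liealg_brk by auto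
  have T: "\<And>U. U \<in> L1 \<Longrightarrow> trp n Q Q' J (adq n Q Q' U) = adq n Q Q' (J U)"
    unfolding trp_def using backq1 by simp
  have B: "\<And>U V. U \<in> L1 \<Longrightarrow> V \<in> L1 \<Longrightarrow> brk n (adq n Q Q' U) (adq n Q Q' V) = adq n Q Q' (brk n U V)"
    using adq_brk[OF g] s1 by simp
  have "nijenhuis n (trp n Q Q' J) X Y = adq n Q Q' (nijenhuis n J X' Y')"
    unfolding X Y nijenhuis_def
    by (simp add: T B x' y' inJ inb adq_add adq_diff)
  then show ?thesis using nj[OF x' y'] by simp
qed

lemma tr_hyper:
  assumes hp: "hyper_paracomplex n L1 J1 J2 J3" and hh: "hyperparahermitian L1 (Bform n) J1 J2 J3"
  shows "hyper_paracomplex n L2 (trp n Q Q' J1) (trp n Q Q' J2) (trp n Q Q' J3)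
    \<and> hyperparahermitian L2 (Bform n) (trp n Q Q' J1) (trp n Q Q' J2) (trp n Q Q' J3)"
proof -
  have l1: "lin_endo L1 J1" and l2: "lin_endo L1 J2" and l3: "lin_endo L1 J3"
    using hp unfolding hyper_paracomplex_def almost_hyper_paracomplex_def by auto
  have r: "\<And>X. X \<in> L1 \<Longrightarrow> J1 (J1 X) = X \<and> J2 (J2 X) = X \<and> J3 (J3 X) = - X \<and>
              J1 (J2 X) = J3 X \<and> J2 (J1 X) = - J3 X"
    using hp unfolding hyper_paracomplex_def almost_hyper_paracomplex_def by auto
  have nj: "\<And>J X Y. J \<in> {J1, J2, J3} \<Longrightarrow> X \<in> L1 \<Longrightarrow> Y \<in> L1 \<Longrightarrow> nijenhuis n J X Y = 0"
    using hp unfolding hyper_paracomplex_def by blast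
  have iso: "\<And>X Y. X \<in> L1 \<Longrightarrow> Y \<in> L1 \<Longrightarrow> Bform n (J1 X) (J1 Y) = (-1) * Bform n X Y \<and>
      Bform n (J2 X) (J2 Y) = (-1) * Bform n X Y \<and> Bform n (J3 X) (J3 Y) = 1 * Bform n X Y"
    using hh unfolding hyperparahermitian_def by auto
  have c: "\<And>J K R X. lin_endo L1 K \<Longrightarrow> (\<And>X. X \<in> L1 \<Longrightarrow> J (K X) = R X) \<Longrightarrow> X \<in> L2 \<Longrightarrow>
     trp n Q Q' J (trp n Q Q' K X) = adq n Q Q' (R (adq n Q' Q X))"
    using tr_comp to1 by simp
  have idb: "\<And>X. X \<in> L2 \<Longrightarrow> adq n Q Q' (adq n Q' Q X) = X" using backq .
  have nb: "\<And>X. X \<in> L2 \<Longrightarrow> adq n Q Q' (- adq n Q' Q X) = - X" using backq by (simp add: adq_uminus)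
  have t3: "\<And>X. X \<in> L2 \<Longrightarrow> adq n Q Q' (- J3 (adq n Q' Q X)) = - trp n Q Q' J3 X"
    unfolding trp_def by (simp add: adq_uminus)
  show ?thesis
    unfolding hyper_paracomplex_def almost_hyper_paracomplex_def hyperparahermitian_def
  proof (intro conjI ballI)
    show "lin_endo L2 (trp n Q Q' J1)" "lin_endo L2 (trp n Q Q' J2)" "lin_endo L2 (trp n Q Q' J3)"
      using tr_lin l1 l2 l3 by auto
  next
    fix X assume x: "X \<in> L2"
    show "trp n Q Q' J1 (trp n Q Q' J1 X) = X" using c[OF l1, of J1 "\<lambda>X. X"] r x idb by simp
    show "trp n Q Q' J2 (trp n Q Q' J2 X) = X" using c[OF l2, of J2 "\<lambda>X. X"] r x idb by simp
    show "trp n Q Q' J3 (trp n Q Q' J3 X) = - X" using c[OF l3, of J3 "\<lambda>X. - X"] r x nb by simp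
    show "trp n Q Q' J1 (trp n Q Q' J2 X) = trp n Q Q' J3 X" using c[OF l2, of J1 J3] r x
      unfolding trp_def by simp
    show "trp n Q Q' J2 (trp n Q Q' J1 X) = - trp n Q Q' J3 X" using c[OF l1, of J2 "\<lambda>X. - J3 X"] r x t3 by simp
  next
    fix J X Y assume J: "J \<in> {trp n Q Q' J1, trp n Q Q' J2, trp n Q Q' J3}" and x: "X \<in> L2" and y: "Y \<in> L2"
    show "nijenhuis n J X Y = 0"
      using J tr_nij[OF l1, of X Y] tr_nij[OF l2, of X Y] tr_nij[OF l3, of X Y] nj x y by auto
  next
    fix X Y assume x: "X \<in> L2" and y: "Y \<in> L2"
    show "Bform n (trp n Q Q' J1 X) (trp n Q Q' J1 Y) = - Bform n X Y"
      using tr_iso[OF l1, of "-1" X Y] iso x y by simp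
    show "Bform n (trp n Q Q' J2 X) (trp n Q Q' J2 Y) = - Bform n X Y"
      using tr_iso[OF l2, of "-1" X Y] iso x y by simp
    show "- Bform n (trp n Q Q' J3 X) (trp n Q Q' J3 Y) = - Bform n X Y"
      using tr_iso[OF l3, of "1" X Y] iso x y by simp
  qed
qed

end


definition rr :: complex where "rr = complex_of_real (sqrt 2 / 2)"

lemma rr_sq: "rr * rr = 1/2"
proof -
  have "sqrt 2 / 2 * (sqrt 2 / 2) = (1/2::real)" by (simp add: field_simps)
  then show ?thesis unfolding rr_def by (metis of_real_divide of_real_mult of_real_numeral of_real_1)
qed

lemma rr_nz: "rr \<noteq> 0" using rr_sq by auto

lemma sum_sparse:
  fixes f :: "nat \<Rightarrow> complex"
  assumes a: "a < 2*k+1" and z: "\<And>l. l < 2*k+1 \<Longrightarrow> l \<noteq> a \<Longrightarrow> l \<noteq> 2*k - a \<Longrightarrow> f l = 0"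
  shows "(\<Sum>l<2*k+1. f l) = (if a = k then f a else f a + f (2*k - a))"
proof -
  have sub: "{a, 2*k - a} \<subseteq> {..<2*k+1}" using a by auto
  have "(\<Sum>l<2*k+1. f l) = (\<Sum>l\<in>{a, 2*k - a}. f l)"
    by (rule sum.mono_neutral_right) (use sub z in auto)
  also have "\<dots> = (if a = k then f a else f a + f (2*k - a))"
    using a by (cases "a = k") auto
  finally show ?thesis .
qed

definition Sm :: "nat \<Rightarrow> cmat" where
  "Sm k = (\<lambda>i j. if i < 2*k+1 \<and> j < 2*k+1 \<and> j = 2*k - i then 1 else 0)"

definition Pm :: "nat \<Rightarrow> cmat" where
  "Pm k = (\<lambda>i j. if i < 2*k+1 \<and> j < 2*k+1 then
     (if i = j then (if i = k then 1 else if i < k then rr else - rr) else if j = 2*k - i then rr else 0) else 0)"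

definition Km :: "nat \<Rightarrow> cmat" where
  "Km k = (\<lambda>i j. if i < 2*k+1 \<and> j < 2*k+1 then
     (if i = j then (if i = k then 1 else rr) else if j = 2*k - i then \<i> * rr else 0) else 0)"

definition Ki :: "nat \<Rightarrow> cmat" where
  "Ki k = (\<lambda>i j. if i < 2*k+1 \<and> j < 2*k+1 then
     (if i = j then (if i = k then 1 else rr) else if j = 2*k - i then - \<i> * rr else 0) else 0)"

abbreviation Ip :: "nat \<Rightarrow> cmat" where "Ip k \<equiv> Ipq (k+1) k"

lemma Ip_eq: "Ip k = (\<lambda>i j. if i = j \<and> i < 2*k+1 then (if i \<le> k then 1 else -1) else 0)"
  unfolding Ipq_def by (intro ext) auto

lemma st_facts: "(a::nat) < 2*k+1 \<Longrightarrow> 2*k - a < 2*k+1" "a < 2*k+1 \<Longrightarrow> 2*k - (2*k - a) = a"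
  "a < 2*k+1 \<Longrightarrow> a \<noteq> k \<Longrightarrow> 2*k - a \<noteq> a" "a < 2*k+1 \<Longrightarrow> (2*k - a = k) = (a = k)"
  "a < 2*k+1 \<Longrightarrow> (2*k - a < k) = (k < a)"
  by auto

lemma mmul_Pm_left: "mmul (2*k+1) (Pm k) X a b = (if a < 2*k+1 then
   (if a = k then X a b else if a < k then rr * X a b + rr * X (2*k-a) b else rr * X (2*k-a) b - rr * X a b) else 0)"
proof (cases "a < 2*k+1")
  case True
  show ?thesis unfolding mmul_def
    by (subst sum_sparse[OF True]) (auto simp: Pm_def True)
qed (simp add: mmul_def Pm_def)

lemma mmul_Pm_right: "mmul (2*k+1) X (Pm k) a b = (if b < 2*k+1 then
   (if b = k then X a b else if b < k then rr * X a b + rr * X a (2*k-b) else rr * X a (2*k-b) - rr * X a b) else 0)"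
proof (cases "b < 2*k+1")
  case True
  show ?thesis unfolding mmul_def
    by (subst sum_sparse[OF True]) (auto simp: Pm_def True)
qed (simp add: mmul_def Pm_def)

lemma mmul_Km_left: "mmul (2*k+1) (Km k) X a b = (if a < 2*k+1 then
   (if a = k then X a b else rr * X a b + \<i> * rr * X (2*k-a) b) else 0)"
proof (cases "a < 2*k+1")
  case True
  show ?thesis unfolding mmul_def
    by (subst sum_sparse[OF True]) (auto simp: Km_def True)
qed (simp add: mmul_def Km_def)

lemma mmul_Km_right: "mmul (2*k+1) X (Km k) a b = (if b < 2*k+1 then
   (if b = k then X a b else rr * X a b + \<i> * rr * X a (2*k-b)) else 0)"
proof (cases "b < 2*k+1")
  case True
  show ?thesis unfolding mmul_def
    by (subst sum_sparse[OF True]) (auto simp: Km_def True)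
qed (simp add: mmul_def Km_def)

lemma mmul_Ki_left: "mmul (2*k+1) (Ki k) X a b = (if a < 2*k+1 then
   (if a = k then X a b else rr * X a b - \<i> * rr * X (2*k-a) b) else 0)"
proof (cases "a < 2*k+1")
  case True
  show ?thesis unfolding mmul_def
    by (subst sum_sparse[OF True]) (auto simp: Ki_def True)
qed (simp add: mmul_def Ki_def)

lemma mmul_Ki_right: "mmul (2*k+1) X (Ki k) a b = (if b < 2*k+1 then
   (if b = k then X a b else rr * X a b - \<i> * rr * X a (2*k-b)) else 0)"
proof (cases "b < 2*k+1")
  case True
  show ?thesis unfolding mmul_def
    by (subst sum_sparse[OF True]) (auto simp: Ki_def True)
qed (simp add: mmul_def Ki_def)

lemma mmul_Sm_left: "mmul (2*k+1) (Sm k) X a b = (if a < 2*k+1 then X (2*k-a) b else 0)"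
proof (cases "a < 2*k+1")
  case True
  show ?thesis unfolding mmul_def
    by (subst sum_sparse[OF True]) (auto simp: Sm_def True)
qed (simp add: mmul_def Sm_def)

lemma mmul_Sm_right: "mmul (2*k+1) X (Sm k) a b = (if b < 2*k+1 then X a (2*k-b) else 0)"
proof (cases "b < 2*k+1")
  case True
  show ?thesis unfolding mmul_def
    by (subst sum_sparse[OF True]) (auto simp: Sm_def True)
qed (simp add: mmul_def Sm_def)

lemma mmul_Ip_left: "mmul (2*k+1) (Ip k) X a b = (if a < 2*k+1 then (if a \<le> k then X a b else - X a b) else 0)"
proof (cases "a < 2*k+1")
  case True
  show ?thesis unfolding mmul_def Ip_eq
    by (subst sum_sparse[OF True]) (auto simp: True)
qed (simp add: mmul_def Ipq_def)

lemma mmul_Ip_right: "mmul (2*k+1) X (Ip k) a b = (if b < 2*k+1 then (if b \<le> k then X a b else - X a b) else 0)"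
proof (cases "b < 2*k+1")
  case True
  show ?thesis unfolding mmul_def Ip_eq
    by (subst sum_sparse[OF True]) (auto simp: True)
qed (simp add: mmul_def Ipq_def)

lemmas mmul_concrete = mmul_Pm_left mmul_Pm_right mmul_Km_left mmul_Km_right mmul_Ki_left mmul_Ki_right
  mmul_Sm_left mmul_Sm_right mmul_Ip_left mmul_Ip_right

lemma supp_concrete: "supp (2*k+1) (Pm k)" "supp (2*k+1) (Km k)" "supp (2*k+1) (Ki k)" "supp (2*k+1) (Sm k)"
  unfolding supp_def Pm_def Km_def Ki_def Sm_def by auto

lemma rr_sq': "rr * (rr * x) = x / 2" using rr_sq by (metis mult.assoc mult.commute times_divide_eq_right mult.right_neutral divide_inverse)

lemma PP: "mmul (2*k+1) (Pm k) (Pm k) = idm (2*k+1)"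
proof (rule cmat_eqI)
  fix i j
  show "mmul (2*k+1) (Pm k) (Pm k) i j = idm (2*k+1) i j"
    unfolding mmul_Pm_left idm_def
    by (auto simp: Pm_def algebra_simps rr_sq rr_sq')
qed

lemma gpair_P: "gpair (2*k+1) (Pm k) (Pm k)"
  unfolding gpair_def using PP supp_concrete by simp

lemma KKi: "mmul (2*k+1) (Km k) (Ki k) = idm (2*k+1)"
proof (rule cmat_eqI)
  fix i j
  show "mmul (2*k+1) (Km k) (Ki k) i j = idm (2*k+1) i j"
    unfolding mmul_Km_left idm_def
    by (auto simp: Ki_def algebra_simps rr_sq rr_sq')
qed

lemma KiK: "mmul (2*k+1) (Ki k) (Km k) = idm (2*k+1)"
proof (rule cmat_eqI)
  fix i j
  show "mmul (2*k+1) (Ki k) (Km k) i j = idm (2*k+1) i j"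
    unfolding mmul_Ki_left idm_def
    by (auto simp: Km_def algebra_simps rr_sq rr_sq')
qed

lemma gpair_K: "gpair (2*k+1) (Km k) (Ki k)"
  unfolding gpair_def using KKi KiK supp_concrete by simp

lemma cnj_rr: "cnj rr = rr" unfolding rr_def by simp

lemma madj_P: "madj (Pm k) = Pm k"
  unfolding madj_def Pm_def by (intro ext) (auto simp: cnj_rr)

lemma madj_K: "madj (Km k) = Ki k"
  unfolding madj_def Km_def Ki_def by (intro ext) (auto simp: cnj_rr)

lemma madj_Ki: "madj (Ki k) = Km k"
  unfolding madj_def Km_def Ki_def by (intro ext) (auto simp: cnj_rr)

lemma P_Ip: "mmul (2*k+1) (Pm k) (Ip k) = mmul (2*k+1) (Sm k) (Pm k)"
proof (rule cmat_eqI)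
  fix i j
  show "mmul (2*k+1) (Pm k) (Ip k) i j = mmul (2*k+1) (Sm k) (Pm k) i j"
    unfolding mmul_Pm_left mmul_Sm_left
    by (auto simp: Pm_def Ipq_def)
qed

lemma Ip_P: "mmul (2*k+1) (Ip k) (Pm k) = mmul (2*k+1) (Pm k) (Sm k)"
proof (rule cmat_eqI)
  fix i j
  show "mmul (2*k+1) (Ip k) (Pm k) i j = mmul (2*k+1) (Pm k) (Sm k) i j"
    unfolding mmul_Ip_left mmul_Pm_left
    by (auto simp: Pm_def Sm_def)
qed

lemma K_Sm: "mmul (2*k+1) (Km k) (Sm k) = mmul (2*k+1) (Sm k) (Km k)"
proof (rule cmat_eqI)
  fix i j
  show "mmul (2*k+1) (Km k) (Sm k) i j = mmul (2*k+1) (Sm k) (Km k) i j"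
    unfolding mmul_Km_left mmul_Sm_left
    by (auto simp: Km_def Sm_def)
qed

lemma Ki_Sm: "mmul (2*k+1) (Ki k) (Sm k) = mmul (2*k+1) (Sm k) (Ki k)"
proof (rule cmat_eqI)
  fix i j
  show "mmul (2*k+1) (Ki k) (Sm k) i j = mmul (2*k+1) (Sm k) (Ki k) i j"
    unfolding mmul_Ki_left mmul_Sm_left
    by (auto simp: Ki_def Sm_def)
qed

lemma mtrace_adq: "gpair n Q Q' \<Longrightarrow> supp n Z \<Longrightarrow> mtrace n (adq n Q Q' Z) = mtrace n Z"
proof -
  assume g: "gpair n Q Q'" and s: "supp n Z"
  have "mtrace n (adq n Q Q' Z) = mtrace n (mmul n (mmul n Q' Q) Z)"
    unfolding adq_def by (metis mmul_assoc mtrace_comm)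
  also have "\<dots> = mtrace n Z" using g s unfolding gpair_def by (simp add: mmul_idm_left)
  finally show ?thesis .
qed

lemma liealg_adq:
  assumes g: "gpair n Q Q'" and h1: "mmul n (madj Q) S2 = mmul n S1 Q'"
    and h2: "mmul n S2 Q = mmul n (madj Q') S1" and x: "X \<in> liealg n S1"
  shows "adq n Q Q' X \<in> liealg n S2"
proof -
  have sx: "supp n X" and tx: "mtrace n X = 0" and cx: "mmul n (madj X) S1 + mmul n S1 X = 0"
    using x unfolding liealg_def by auto
  have "mmul n (madj (adq n Q Q' X)) S2 + mmul n S2 (adq n Q Q' X)
      = mmul n (madj Q') (mmul n (madj X) (mmul n (madj Q) S2)) + mmul n (mmul n S2 Q) (mmul n X Q')"
    unfolding adq_def by (simp add: madj_mmul mmul_assoc)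
  also have "\<dots> = mmul n (madj Q') (mmul n (mmul n (madj X) S1 + mmul n S1 X) Q')"
    unfolding h1 h2 by (simp add: mmul_assoc mmul_lin)
  also have "\<dots> = 0" using cx by simp
  finally show ?thesis unfolding liealg_def using supp_adq[OF g] mtrace_adq[OF g sx] tx by simp
qed

definition Lp :: "nat \<Rightarrow> cmat set" where "Lp k = liealg (2*k+1) (Sm k)"

abbreviation LL :: "nat \<Rightarrow> cmat set" where "LL k \<equiv> liealg (2*k+1) (Ip k)"

lemma transp_P: "transp (2*k+1) (Pm k) (Pm k) (Sm k) (Ip k) (Lp k) (LL k)"
proof -
  have a: "adq (2*k+1) (Pm k) (Pm k) X \<in> LL k" if "X \<in> Lp k" for X
    by (rule liealg_adq[OF gpair_P]) (use that P_Ip[of k] Ip_P[of k] in \<open>simp_all add: madj_P Lp_def\<close>)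
  have b: "adq (2*k+1) (Pm k) (Pm k) X \<in> Lp k" if "X \<in> LL k" for X
    unfolding Lp_def
    by (rule liealg_adq[OF gpair_P]) (use that P_Ip[of k] Ip_P[of k] in \<open>simp_all add: madj_P\<close>)
  show ?thesis unfolding transp_def using gpair_P a b by (simp add: Lp_def)
qed

lemma transp_K: "transp (2*k+1) (Km k) (Ki k) (Sm k) (Sm k) (Lp k) (Lp k)"
proof -
  have a: "adq (2*k+1) (Km k) (Ki k) X \<in> Lp k" if "X \<in> Lp k" for X
    unfolding Lp_def
    by (rule liealg_adq[OF gpair_K]) (use that K_Sm[of k] Ki_Sm[of k] in \<open>simp_all add: madj_K madj_Ki Lp_def\<close>)
  have b: "adq (2*k+1) (Ki k) (Km k) X \<in> Lp k" if "X \<in> Lp k" for X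
    unfolding Lp_def
    by (rule liealg_adq[OF gpair_sym[OF gpair_K]]) (use that K_Sm[of k] Ki_Sm[of k] in \<open>simp_all add: madj_K madj_Ki Lp_def\<close>)
  show ?thesis unfolding transp_def using gpair_K a b by (simp add: Lp_def)
qed


section \<open>The model Lp and the first product structure\<close>

lemma Lp_alt: "Lp k = liealg (Suc (2*k)) (Sm k)" unfolding Lp_def by simp

lemma mmul_Sm_left': "mmul (Suc (2*k)) (Sm k) X a b = (if a < Suc (2*k) then X (2*k-a) b else 0)"
  using mmul_Sm_left[of k X a b] by simp
lemma mmul_Sm_right': "mmul (Suc (2*k)) X (Sm k) a b = (if b < Suc (2*k) then X a (2*k-b) else 0)"
  using mmul_Sm_right[of k X a b] by simp

lemma Lp_entry:
  assumes x: "X \<in> Lp k" and a: "a < Suc (2*k)" and b: "b < Suc (2*k)"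
  shows "X a b = - cnj (X (2*k - b) (2*k - a))"
proof -
  have "mmul (Suc (2*k)) (madj X) (Sm k) + mmul (Suc (2*k)) (Sm k) X = 0"
    using x unfolding Lp_alt liealg_def by simp
  then have "(mmul (Suc (2*k)) (madj X) (Sm k) + mmul (Suc (2*k)) (Sm k) X) (2*k - a) b = 0" by simp
  then have "cnj (X (2*k - b) (2*k - a)) + X a b = 0"
    using a b by (simp add: mmul_Sm_left' mmul_Sm_right' madj_def less_Suc_eq_le)
  then show ?thesis by (simp add: eq_neg_iff_add_eq_0 add.commute)
qed

lemma Lp_supp: "X \<in> Lp k \<Longrightarrow> supp (Suc (2*k)) X"
  unfolding Lp_alt liealg_def by simp

lemma Lp_out: "X \<in> Lp k \<Longrightarrow> (Suc (2*k) \<le> a \<or> Suc (2*k) \<le> b) \<Longrightarrow> X a b = 0"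
  using Lp_supp unfolding supp_def by blast

lemma trace_split:
  fixes f :: "nat \<Rightarrow> complex"
  shows "(\<Sum>a<Suc (2*k). f a) = (\<Sum>j<k. f j + f (2*k - j)) + f k"
proof -
  have u: "{..<Suc (2*k)} = {..<k} \<union> {k} \<union> (\<lambda>j. 2*k - j) ` {..<k}"
  proof (rule set_eqI, rule iffI)
    fix x assume "x \<in> {..<Suc (2*k)}"
    then have "x < k \<or> x = k \<or> (k < x \<and> x \<le> 2*k)" by auto
    then show "x \<in> {..<k} \<union> {k} \<union> (\<lambda>j. 2*k - j) ` {..<k}"
    proof (elim disjE)
      assume "k < x \<and> x \<le> 2*k"
      then have "x = 2*k - (2*k - x)" "2*k - x < k" by auto
      then show ?thesis by blast
    qed auto
  qed auto
  have inj: "inj_on (\<lambda>j. 2*k - j) {..<k}" by (auto simp: inj_on_def)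
  have "(\<Sum>a<Suc (2*k). f a) = (\<Sum>a\<in>{..<k} \<union> {k} \<union> (\<lambda>j. 2*k - j) ` {..<k}. f a)" using u by simp
  also have "\<dots> = (\<Sum>a\<in>{..<k} \<union> {k}. f a) + (\<Sum>a\<in>(\<lambda>j. 2*k - j) ` {..<k}. f a)"
    by (rule sum.union_disjoint) auto
  also have "(\<Sum>a\<in>(\<lambda>j. 2*k - j) ` {..<k}. f a) = (\<Sum>j<k. f (2*k - j))"
    using sum.reindex[OF inj] by simp
  also have "(\<Sum>a\<in>{..<k} \<union> {k}. f a) = (\<Sum>j<k. f j) + f k" by simp
  finally show ?thesis by (simp add: sum.distrib)
qed

definition dg :: "nat \<Rightarrow> (nat \<Rightarrow> real) \<Rightarrow> (nat \<Rightarrow> real) \<Rightarrow> nat \<Rightarrow> complex" where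
  "dg k p q a = (if a < k then Complex (p a) (q a)
     else if a = k then Complex 0 (-2 * (\<Sum>l<k. q l))
     else Complex (- p (2*k - a)) (q (2*k - a)))"

lemma dg_sum: "(\<Sum>a<Suc (2*k). dg k p q a) = 0"
proof -
  have "dg k p q j + dg k p q (2*k - j) = Complex 0 (2 * q j)" if j: "j < k" for j
  proof -
    have h: "\<not> (2*k-j < k)" "2*k - j \<noteq> k" "2*k-(2*k-j) = j" using j by auto
    show ?thesis using j by (simp add: dg_def h complex_eq_iff)
  qed
  then have "(\<Sum>j<k. dg k p q j + dg k p q (2*k - j)) = (\<Sum>j<k. Complex 0 (2 * q j))"
    by (intro sum.cong) auto
  also have "\<dots> = Complex 0 (2 * (\<Sum>j<k. q j))"
    by (simp add: complex_eq_iff sum_distrib_left)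
  finally show ?thesis unfolding trace_split by (simp add: dg_def complex_eq_iff)
qed

lemma dg_star: "a < Suc (2*k) \<Longrightarrow> dg k p q (2*k - a) = - cnj (dg k p q a)"
  unfolding dg_def by (auto simp: complex_eq_iff)

definition al :: "cmat \<Rightarrow> nat \<Rightarrow> real" where "al X j = Re (X j j)"
definition be :: "cmat \<Rightarrow> nat \<Rightarrow> real" where "be X j = Im (X j j)"

lemma Lp_diag:
  assumes x: "X \<in> Lp k" and a: "a < Suc (2*k)"
  shows "X a a = dg k (al X) (be X) a"
proof -
  have st: "\<And>j. j < Suc (2*k) \<Longrightarrow> X (2*k - j) (2*k - j) = - cnj (X j j)"
    using Lp_entry[OF x] by (metis diff_diff_cancel diff_le_self le_imp_less_Suc less_Suc_eq_le)
  have kk: "X k k = - cnj (X k k)" using Lp_entry[OF x, of k k] by simp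
  have tr: "(\<Sum>a<Suc (2*k). X a a) = 0" using x unfolding Lp_alt liealg_def mtrace_def by simp
  then have "(\<Sum>j<k. X j j + X (2*k - j) (2*k - j)) + X k k = 0" unfolding trace_split .
  then have "(\<Sum>j<k. X j j - cnj (X j j)) + X k k = 0" using st by simp
  then have "Im (\<Sum>j<k. X j j - cnj (X j j)) + Im (X k k) = 0" and "Re (X k k) = 0"
    using kk by (auto simp: complex_eq_iff)
  moreover have "(\<Sum>x<k. 2 * Im (X x x)) = 2 * (\<Sum>l<k. Im (X l l))" by (simp add: sum_distrib_left)
  ultimately have ik: "Im (X k k) = -2 * (\<Sum>l<k. Im (X l l))" and rk: "Re (X k k) = 0"
    by auto
  show ?thesis
  proof (cases "a < k")
    case True then show ?thesis unfolding dg_def al_def be_def by (simp add: complex_eq_iff)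
  next
    case False
    show ?thesis
    proof (cases "a = k")
      case True then show ?thesis using ik rk unfolding dg_def al_def be_def by (simp add: complex_eq_iff)
    next
      case False
      then have "k < a" using \<open>\<not> a < k\<close> by simp
      have "X a a = - cnj (X (2*k - a) (2*k - a))" using Lp_entry[OF x a a] .
      then show ?thesis using False \<open>\<not> a < k\<close> unfolding dg_def al_def be_def by (simp add: complex_eq_iff)
    qed
  qed
qed

lemma mk_Lp:
  assumes s: "supp (Suc (2*k)) Y"
    and off: "\<And>a b. a < Suc (2*k) \<Longrightarrow> b < Suc (2*k) \<Longrightarrow> a \<noteq> b \<Longrightarrow> Y a b = - cnj (Y (2*k - b) (2*k - a))"
    and d: "\<And>a. a < Suc (2*k) \<Longrightarrow> Y a a = dg k p q a"
  shows "Y \<in> Lp k"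
proof -
  have tr: "mtrace (Suc (2*k)) Y = 0" unfolding mtrace_def using d dg_sum by simp
  have ent: "Y a b = - cnj (Y (2*k - b) (2*k - a))" if a: "a < Suc (2*k)" and b: "b < Suc (2*k)" for a b
  proof (cases "a = b")
    case True
    then show ?thesis using d a dg_star[OF a, of p q] by simp
  next
    case False
    then show ?thesis using off[OF a b] by simp
  qed
  have "mmul (Suc (2*k)) (madj Y) (Sm k) + mmul (Suc (2*k)) (Sm k) Y = 0"
  proof (rule cmat_eqI)
    fix i j
    show "(mmul (Suc (2*k)) (madj Y) (Sm k) + mmul (Suc (2*k)) (Sm k) Y) i j = 0 i j"
    proof (cases "i < Suc (2*k) \<and> j < Suc (2*k)")
      case True
      then have "Y (2*k - i) j = - cnj (Y (2*k - j) i)"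
        using ent[of "2*k - i" j] by simp
      then show ?thesis using True by (simp add: mmul_Sm_left' mmul_Sm_right' madj_def)
    next
      case False
      then show ?thesis using s by (auto simp: mmul_Sm_left' mmul_Sm_right' madj_def supp_def)
    qed
  qed
  then show ?thesis unfolding Lp_alt liealg_def using s tr by simp
qed


definition ww :: "nat \<Rightarrow> real" where "ww k = sqrt (real (2*k+1))"
definition cc :: "nat \<Rightarrow> real" where "cc k = (1 / ww k - 1) / real k"
definition cp :: "nat \<Rightarrow> real" where "cp k = (ww k - 1) / real k"

lemma ww_pos: "0 < ww k" unfolding ww_def by simp
lemma ww_sq: "ww k * ww k = real (2*k+1)" unfolding ww_def by simp

lemma kcc: "0 < k \<Longrightarrow> real k * cc k = 1 / ww k - 1" unfolding cc_def by simp
lemma kcp: "0 < k \<Longrightarrow> real k * cp k = ww k - 1" unfolding cp_def by simp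

lemma cc_cp: "0 < k \<Longrightarrow> cc k + cp k + real k * cc k * cp k = 0"
proof -
  assume k: "0 < k"
  have w: "ww k \<noteq> 0" using ww_pos[of k] by simp
  have "real k * (cc k + cp k + real k * cc k * cp k) = real k * cc k + real k * cp k + (real k * cc k) * (real k * cp k)"
    by (simp add: algebra_simps)
  also have "\<dots> = 0" unfolding kcc[OF k] kcp[OF k] using w by (simp add: field_simps)
  finally show ?thesis using k by simp
qed

lemma cp_sq: "0 < k \<Longrightarrow> 2 * cp k + real k * cp k * cp k = 2"
proof -
  assume k: "0 < k"
  have "real k * (2 * cp k + real k * cp k * cp k) = (real k * cp k + 1) * (real k * cp k + 1) - 1"
    by (simp add: algebra_simps)
  also have "\<dots> = 2 * real k" unfolding kcp[OF k] by (simp add: ww_sq)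
  finally show ?thesis using k by simp
qed

lemma cc_sq: "0 < k \<Longrightarrow> 2 * cc k + real k * cc k * cc k + 2 * (1 + real k * cc k) * (1 + real k * cc k) = 0"
proof -
  assume k: "0 < k"
  have w: "ww k \<noteq> 0" using ww_pos[of k] by simp
  have "real k * (2 * cc k + real k * cc k * cc k + 2 * (1 + real k * cc k) * (1 + real k * cc k))
     = (real k * cc k + 1) * (real k * cc k + 1) - 1 + 2 * real k * (1 + real k * cc k) * (1 + real k * cc k)"
    by (simp add: algebra_simps)
  also have "\<dots> = (1 + 2 * real k) / (ww k * ww k) - 1" unfolding kcc[OF k] using w by (simp add: field_simps)
  also have "\<dots> = 0" unfolding ww_sq by simp
  finally show ?thesis using k by simp
qed

lemma sum_shift:
  fixes x :: "nat \<Rightarrow> real"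
  shows "(\<Sum>j<k. x j + c * S) = (\<Sum>j<k. x j) + real k * c * S"
  by (simp add: sum.distrib)

lemma sum_shift_prod:
  fixes x y :: "nat \<Rightarrow> real"
  shows "(\<Sum>j<k. (x j + c * S) * (y j + c * S')) =
    (\<Sum>j<k. x j * y j) + c * S * (\<Sum>j<k. y j) + c * S' * (\<Sum>j<k. x j) + real k * c * c * S * S'"
  by (simp add: algebra_simps sum.distrib sum_distrib_left sum_distrib_right)

definition Lam :: "nat \<Rightarrow> cmat \<Rightarrow> nat \<Rightarrow> real" where
  "Lam k X j = be X j + cp k * (\<Sum>l<k. be X l)"
definition Mal :: "nat \<Rightarrow> cmat \<Rightarrow> nat \<Rightarrow> real" where
  "Mal k X j = al X j + cc k * (\<Sum>l<k. al X l)"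

definition J1p :: "nat \<Rightarrow> cmat \<Rightarrow> cmat" where
  "J1p k X = (\<lambda>a b. if a < Suc (2*k) \<and> b < Suc (2*k) then
      (if a < b then X a b else if b < a then - X a b else dg k (Lam k X) (Mal k X) a) else 0)"

lemma dg_cong: "(\<And>j. j < k \<Longrightarrow> p j = p' j) \<Longrightarrow> (\<And>j. j < k \<Longrightarrow> q j = q' j) \<Longrightarrow> a < Suc (2*k) \<Longrightarrow>
   dg k p q a = dg k p' q' a"
proof -
  assume hp: "\<And>j. j < k \<Longrightarrow> p j = p' j" and hq: "\<And>j. j < k \<Longrightarrow> q j = q' j" and a: "a < Suc (2*k)"
  have "(\<Sum>l<k. q l) = (\<Sum>l<k. q' l)" using hq by simp
  then show ?thesis unfolding dg_def using hp hq a by auto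
qed

lemma dg_zero: "a < Suc (2*k) \<Longrightarrow> dg k (\<lambda>_. 0) (\<lambda>_. 0) a = 0"
  unfolding dg_def by (simp add: complex_eq_iff)

lemma dg_lin: "dg k (\<lambda>j. c * p j + p' j) (\<lambda>j. c * q j + q' j) a = complex_of_real c * dg k p q a + dg k p' q' a"
  unfolding dg_def by (auto simp: complex_eq_iff sum.distrib sum_distrib_left sum_negf algebra_simps)

lemma dg_re: "j < k \<Longrightarrow> Re (dg k p q j) = p j" unfolding dg_def by simp
lemma dg_im: "j < k \<Longrightarrow> Im (dg k p q j) = q j" unfolding dg_def by simp

lemma J1p_Lp: assumes x: "X \<in> Lp k" shows "J1p k X \<in> Lp k"
proof (rule mk_Lp)
  show "supp (Suc (2*k)) (J1p k X)" unfolding supp_def J1p_def by auto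
next
  fix a b assume a: "a < Suc (2*k)" and b: "b < Suc (2*k)" and ab: "a \<noteq> b"
  have e: "X a b = - cnj (X (2*k - b) (2*k - a))" using Lp_entry[OF x a b] .
  have s: "2*k - b < Suc (2*k)" "2*k - a < Suc (2*k)" by auto
  show "J1p k X a b = - cnj (J1p k X (2*k - b) (2*k - a))"
    using a b ab s e unfolding J1p_def by auto
next
  fix a assume a: "a < Suc (2*k)"
  show "J1p k X a a = dg k (Lam k X) (Mal k X) a" unfolding J1p_def using a by simp
qed

lemma J1p_lin: "J1p k (msc c X + Y) = msc c (J1p k X) + J1p k Y"
proof (rule cmat_eqI)
  fix a b
  have L: "Lam k (msc c X + Y) = (\<lambda>j. c * Lam k X j + Lam k Y j)"
    unfolding Lam_def be_def msc_def by (intro ext) (simp add: sum.distrib sum_distrib_left algebra_simps)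
  have M: "Mal k (msc c X + Y) = (\<lambda>j. c * Mal k X j + Mal k Y j)"
    unfolding Mal_def al_def msc_def by (intro ext) (simp add: sum.distrib sum_distrib_left algebra_simps)
  show "J1p k (msc c X + Y) a b = (msc c (J1p k X) + J1p k Y) a b"
    unfolding J1p_def L M dg_lin by (simp add: msc_def)
qed

lemma J1p_lin_endo: "lin_endo (Lp k) (J1p k)"
  unfolding lin_endo_def using J1p_Lp J1p_lin by blast

lemma be_J1p: "j < k \<Longrightarrow> be (J1p k X) j = Mal k X j"
  unfolding be_def J1p_def by (simp add: dg_im)
lemma al_J1p: "j < k \<Longrightarrow> al (J1p k X) j = Lam k X j"
  unfolding al_def J1p_def by (simp add: dg_re)

lemma J1p_sq: assumes x: "X \<in> Lp k" and k: "0 < k" shows "J1p k (J1p k X) = X"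
proof (rule cmat_eqI)
  fix a b
  have sb: "(\<Sum>l<k. be (J1p k X) l) = (\<Sum>l<k. Mal k X l)" using be_J1p by simp
  have sa: "(\<Sum>l<k. al (J1p k X) l) = (\<Sum>l<k. Lam k X l)" using al_J1p by simp
  have h1: "Lam k (J1p k X) j = al X j" if j: "j < k" for j
  proof -
    have "Lam k (J1p k X) j = Mal k X j + cp k * (\<Sum>l<k. Mal k X l)"
      unfolding Lam_def sb using be_J1p[OF j] by simp
    also have "\<dots> = al X j + (\<Sum>l<k. al X l) * (cc k + cp k + real k * cc k * cp k)"
      unfolding Mal_def sum_shift by (simp add: algebra_simps)
    finally show ?thesis using cc_cp[OF k] by simp
  qed
  have h2: "Mal k (J1p k X) j = be X j" if j: "j < k" for j
  proof -
    have "Mal k (J1p k X) j = Lam k X j + cc k * (\<Sum>l<k. Lam k X l)"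
      unfolding Mal_def sa using al_J1p[OF j] by simp
    also have "\<dots> = be X j + (\<Sum>l<k. be X l) * (cc k + cp k + real k * cc k * cp k)"
      unfolding Lam_def sum_shift by (simp add: algebra_simps)
    finally show ?thesis using cc_cp[OF k] by simp
  qed
  show "J1p k (J1p k X) a b = X a b"
  proof (cases "a < Suc (2*k) \<and> b < Suc (2*k)")
    case True
    then have a: "a < Suc (2*k)" by simp
    have d: "dg k (Lam k (J1p k X)) (Mal k (J1p k X)) a = X a a"
      using dg_cong[OF h1 h2 a] Lp_diag[OF x a] by simp
    show ?thesis using True d unfolding J1p_def by auto
  next
    case False
    then show ?thesis using Lp_out[OF x] unfolding J1p_def by auto
  qed
qed


lemma Bform_sum: "Bform n X Y = (\<Sum>a<n. \<Sum>b<n. X a b * Y b a) / 2"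
  unfolding Bform_def mtrace_def mmul_def by simp

lemma dsplit:
  fixes f :: "nat \<Rightarrow> nat \<Rightarrow> complex"
  shows "(\<Sum>a<n. \<Sum>b<n. f a b) = (\<Sum>a<n. f a a) + (\<Sum>a<n. \<Sum>b\<in>{..<n} - {a}. f a b)"
proof -
  have "\<And>a. a < n \<Longrightarrow> (\<Sum>b<n. f a b) = f a a + (\<Sum>b\<in>{..<n} - {a}. f a b)"
    by (rule sum.remove) auto
  then have "(\<Sum>a<n. \<Sum>b<n. f a b) = (\<Sum>a<n. f a a + (\<Sum>b\<in>{..<n} - {a}. f a b))"
    by (intro sum.cong) auto
  then show ?thesis by (simp add: sum.distrib)
qed

lemma dg_prod: "(\<Sum>a<Suc (2*k). dg k p q a * dg k p' q' a) =
   complex_of_real (2 * (\<Sum>j<k. p j * p' j - q j * q' j) - 4 * (\<Sum>j<k. q j) * (\<Sum>j<k. q' j))"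
proof -
  have "dg k p q j * dg k p' q' j + dg k p q (2*k - j) * dg k p' q' (2*k - j)
      = complex_of_real (2 * (p j * p' j - q j * q' j))" if j: "j < k" for j
  proof -
    have h: "\<not> (2*k-j < k)" "2*k - j \<noteq> k" "2*k-(2*k-j) = j" using j by auto
    have "dg k p q j * dg k p' q' j + dg k p q (2*k - j) * dg k p' q' (2*k - j) =
      Complex (p j) (q j) * Complex (p' j) (q' j) + Complex (- p j) (q j) * Complex (- p' j) (q' j)"
      using j h unfolding dg_def by simp
    then show ?thesis by (simp add: complex_eq_iff algebra_simps)
  qed
  then have "(\<Sum>j<k. dg k p q j * dg k p' q' j + dg k p q (2*k - j) * dg k p' q' (2*k - j))
      = (\<Sum>j<k. complex_of_real (2 * (p j * p' j - q j * q' j)))" by (intro sum.cong) auto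
  also have "\<dots> = complex_of_real (2 * (\<Sum>j<k. p j * p' j - q j * q' j))"
    by (simp add: sum_distrib_left)
  finally show ?thesis unfolding trace_split
    by (simp add: dg_def complex_eq_iff)
qed

lemma quad_ident:
  assumes k: "0 < k"
  shows "2 * (\<Sum>j<k. Lam k X j * Lam k Y j - Mal k X j * Mal k Y j) - 4 * (\<Sum>j<k. Mal k X j) * (\<Sum>j<k. Mal k Y j)
    = - (2 * (\<Sum>j<k. al X j * al Y j - be X j * be Y j) - 4 * (\<Sum>j<k. be X j) * (\<Sum>j<k. be Y j))"
proof -
  define s where "s = (\<Sum>j<k. al X j)"
  define s' where "s' = (\<Sum>j<k. al Y j)"
  define t where "t = (\<Sum>j<k. be X j)"
  define t' where "t' = (\<Sum>j<k. be Y j)"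
  have L: "(\<Sum>j<k. Lam k X j * Lam k Y j) = (\<Sum>j<k. be X j * be Y j) + (2 * cp k + real k * cp k * cp k) * t * t'"
    unfolding Lam_def t_def[symmetric] t'_def[symmetric] sum_shift_prod
    by (simp add: t_def t'_def algebra_simps)
  have M: "(\<Sum>j<k. Mal k X j * Mal k Y j) = (\<Sum>j<k. al X j * al Y j) + (2 * cc k + real k * cc k * cc k) * s * s'"
    unfolding Mal_def s_def[symmetric] s'_def[symmetric] sum_shift_prod
    by (simp add: s_def s'_def algebra_simps)
  have MX: "(\<Sum>j<k. Mal k X j) = (1 + real k * cc k) * s"
    unfolding Mal_def s_def[symmetric] sum_shift by (simp add: s_def algebra_simps)
  have MY: "(\<Sum>j<k. Mal k Y j) = (1 + real k * cc k) * s'"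
    unfolding Mal_def s'_def[symmetric] sum_shift by (simp add: s'_def algebra_simps)
  have e1: "(2 * cp k + real k * cp k * cp k) = 2" using cp_sq[OF k] .
  have e2: "2 * cc k + real k * cc k * cc k = - 2 * (1 + real k * cc k) * (1 + real k * cc k)"
    using cc_sq[OF k] by linarith
  show ?thesis
    unfolding sum_subtractf L M MX MY e1 e2 t_def[symmetric] t'_def[symmetric]
    by (simp add: algebra_simps)
qed

lemma J1p_iso:
  assumes x: "X \<in> Lp k" and y: "Y \<in> Lp k" and k: "0 < k"
  shows "Bform (Suc (2*k)) (J1p k X) (J1p k Y) = - Bform (Suc (2*k)) X Y"
proof -
  let ?n = "Suc (2*k)"
  have off: "(\<Sum>a<?n. \<Sum>b\<in>{..<?n} - {a}. J1p k X a b * J1p k Y b a) = - (\<Sum>a<?n. \<Sum>b\<in>{..<?n} - {a}. X a b * Y b a)"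
  proof -
    have "\<And>a b. a < ?n \<Longrightarrow> b \<in> {..<?n} - {a} \<Longrightarrow> J1p k X a b * J1p k Y b a = - (X a b * Y b a)"
      by (auto simp: J1p_def)
    then have "(\<Sum>a<?n. \<Sum>b\<in>{..<?n} - {a}. J1p k X a b * J1p k Y b a) = (\<Sum>a<?n. \<Sum>b\<in>{..<?n} - {a}. - (X a b * Y b a))"
      by (intro sum.cong) auto
    then show ?thesis by (simp add: sum_negf)
  qed
  have dX: "(\<Sum>a<?n. X a a * Y a a) = (\<Sum>a<?n. dg k (al X) (be X) a * dg k (al Y) (be Y) a)"
    using Lp_diag[OF x] Lp_diag[OF y] by simp
  have dJ: "(\<Sum>a<?n. J1p k X a a * J1p k Y a a) = (\<Sum>a<?n. dg k (Lam k X) (Mal k X) a * dg k (Lam k Y) (Mal k Y) a)"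
    unfolding J1p_def by simp
  have diag: "(\<Sum>a<?n. J1p k X a a * J1p k Y a a) = - (\<Sum>a<?n. X a a * Y a a)"
    unfolding dX dJ dg_prod quad_ident[OF k] by simp
  show ?thesis unfolding Bform_sum dsplit[of "\<lambda>a b. J1p k X a b * J1p k Y b a"] dsplit[of "\<lambda>a b. X a b * Y b a"]
    diag off by (simp add: field_simps)
qed


lemma sum_single:
  fixes f :: "nat \<Rightarrow> complex"
  assumes "\<And>l. l \<noteq> a \<Longrightarrow> f l = 0"
  shows "(\<Sum>l<n. f l) = (if a < n then f a else 0)"
proof -
  have "(\<Sum>l<n. f l) = (\<Sum>l<n. if l = a then f a else 0)"
    using assms by (intro sum.cong) auto
  then show ?thesis by simp
qed

lemma upper_brk:
  assumes X: "\<And>a b. b < a \<Longrightarrow> X a b = 0" and Y: "\<And>a b. b < a \<Longrightarrow> Y a b = 0" and ba: "b \<le> a"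
  shows "brk n X Y a b = 0"
proof (cases "b < a")
  case True
  have "mmul n X Y a b = 0" "mmul n Y X a b = 0" unfolding mmul_def
    using X Y True by (auto intro!: sum.neutral) (metis not_less_iff_gr_or_eq order.strict_trans)+
  then show ?thesis unfolding brk_def by simp
next
  case False
  then have b: "b = a" using ba by simp
  have "mmul n X Y a a = (if a < n then X a a * Y a a else 0)" unfolding mmul_def
    by (rule sum_single) (metis X Y linorder_neqE_nat mult_eq_0_iff)
  moreover have "mmul n Y X a a = (if a < n then Y a a * X a a else 0)" unfolding mmul_def
    by (rule sum_single) (metis X Y linorder_neqE_nat mult_eq_0_iff)
  ultimately show ?thesis unfolding brk_def b by simp
qed

lemma lower_brk:
  assumes X: "\<And>a b. a < b \<Longrightarrow> X a b = 0" and Y: "\<And>a b. a < b \<Longrightarrow> Y a b = 0" and ba: "a \<le> b"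
  shows "brk n X Y a b = 0"
proof (cases "a < b")
  case True
  have "mmul n X Y a b = 0" "mmul n Y X a b = 0" unfolding mmul_def
    using X Y True by (auto intro!: sum.neutral) (metis not_less_iff_gr_or_eq order.strict_trans)+
  then show ?thesis unfolding brk_def by simp
next
  case False
  then have b: "b = a" using ba by simp
  have "mmul n X Y a a = (if a < n then X a a * Y a a else 0)" unfolding mmul_def
    by (rule sum_single) (metis X Y linorder_neqE_nat mult_eq_0_iff)
  moreover have "mmul n Y X a a = (if a < n then Y a a * X a a else 0)" unfolding mmul_def
    by (rule sum_single) (metis X Y linorder_neqE_nat mult_eq_0_iff)
  ultimately show ?thesis unfolding brk_def b by simp
qed

lemma J1p_fix_upper:
  assumes x: "X \<in> Lp k" and f: "J1p k X = X" and ba: "b < a"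
  shows "X a b = 0"
proof (cases "a < Suc (2*k) \<and> b < Suc (2*k)")
  case True
  have "J1p k X a b = X a b" using f by simp
  then show ?thesis using True ba unfolding J1p_def by (auto simp: eq_neg_iff_add_eq_0)
next
  case False
  then show ?thesis using Lp_out[OF x] by auto
qed

lemma J1p_neg_lower:
  assumes x: "X \<in> Lp k" and f: "J1p k X = - X" and ba: "a < b"
  shows "X a b = 0"
proof (cases "a < Suc (2*k) \<and> b < Suc (2*k)")
  case True
  have "J1p k X a b = - X a b" using f by simp
  then show ?thesis using True ba unfolding J1p_def by (auto simp: eq_neg_iff_add_eq_0)
next
  case False
  then show ?thesis using Lp_out[OF x] by auto
qed

lemma Lam_Mal_zero:
  assumes z: "\<And>a. Z a a = 0"
  shows "Lam k Z = (\<lambda>_. 0)" "Mal k Z = (\<lambda>_. 0)"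
  unfolding Lam_def Mal_def al_def be_def using z by auto

lemma J1p_strict_upper:
  assumes z: "\<And>a b. b \<le> a \<Longrightarrow> Z a b = 0" and s: "supp (Suc (2*k)) Z"
  shows "J1p k Z a b = Z a b"
proof -
  have d: "\<And>a. Z a a = 0" using z by simp
  have "dg k (Lam k Z) (Mal k Z) a = 0" if "a < Suc (2*k)" unfolding Lam_Mal_zero[OF d] using dg_zero that .
  then show ?thesis unfolding J1p_def using z d
    using s by (auto simp: not_less supp_def)
qed

lemma J1p_strict_lower:
  assumes z: "\<And>a b. a \<le> b \<Longrightarrow> Z a b = 0" and s: "supp (Suc (2*k)) Z"
  shows "J1p k Z a b = - Z a b"
proof -
  have d: "\<And>a. Z a a = 0" using z by simp
  have "dg k (Lam k Z) (Mal k Z) a = 0" if "a < Suc (2*k)" unfolding Lam_Mal_zero[OF d] using dg_zero that .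
  then show ?thesis unfolding J1p_def using z d
    using s by (auto simp: not_less supp_def)
qed

lemma J1p_nij:
  assumes k: "0 < k" and x: "X \<in> Lp k" and y: "Y \<in> Lp k"
  shows "nijenhuis (Suc (2*k)) (J1p k) X Y = 0"
proof (rule para_integrable[OF Lp_alt J1p_lin_endo])
  show "J1p k (J1p k X) = X" if "X \<in> Lp k" for X using J1p_sq[OF that k] .
next
  fix X Y assume x: "X \<in> Lp k" and y: "Y \<in> Lp k" and fx: "J1p k X = X" and fy: "J1p k Y = Y"
  have uX: "\<And>a b. b < a \<Longrightarrow> X a b = 0" using J1p_fix_upper[OF x fx] by blast
  have uY: "\<And>a b. b < a \<Longrightarrow> Y a b = 0" using J1p_fix_upper[OF y fy] by blast
  have sb: "supp (Suc (2*k)) (brk (Suc (2*k)) X Y)" using liealg_brk x y Lp_alt Lp_supp by metis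
  show "J1p k (brk (Suc (2*k)) X Y) = brk (Suc (2*k)) X Y"
  proof (rule cmat_eqI, rule J1p_strict_upper[OF _ sb])
    fix a b :: nat assume "b \<le> a"
    then show "brk (Suc (2*k)) X Y a b = 0" using upper_brk[where X = X and Y = Y, OF uX uY] by blast
  qed
next
  fix X Y assume x: "X \<in> Lp k" and y: "Y \<in> Lp k" and fx: "J1p k X = - X" and fy: "J1p k Y = - Y"
  have uX: "\<And>a b. a < b \<Longrightarrow> X a b = 0" using J1p_neg_lower[OF x fx] by blast
  have uY: "\<And>a b. a < b \<Longrightarrow> Y a b = 0" using J1p_neg_lower[OF y fy] by blast
  have sb: "supp (Suc (2*k)) (brk (Suc (2*k)) X Y)" using liealg_brk x y Lp_alt Lp_supp by metis
  show "J1p k (brk (Suc (2*k)) X Y) = - brk (Suc (2*k)) X Y"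
  proof (rule cmat_eqI)
    fix i j
    have "J1p k (brk (Suc (2*k)) X Y) i j = - brk (Suc (2*k)) X Y i j"
    proof (rule J1p_strict_lower[OF _ sb])
      fix a b :: nat assume "a \<le> b"
      then show "brk (Suc (2*k)) X Y a b = 0" using lower_brk[where X = X and Y = Y, OF uX uY] by blast
    qed
    then show "J1p k (brk (Suc (2*k)) X Y) i j = (- brk (Suc (2*k)) X Y) i j" by simp
  qed
qed (use x y in auto)


section \<open>The rotation phi\<close>

abbreviation phi :: "nat \<Rightarrow> cmat \<Rightarrow> cmat" where
  "phi k X \<equiv> adq (Suc (2*k)) (Km k) (Ki k) X"

lemma mmul_Km_left': "mmul (Suc (2*k)) (Km k) X a b = (if a < Suc (2*k) then
   (if a = k then X a b else rr * X a b + \<i> * rr * X (2*k-a) b) else 0)"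
  using mmul_Km_left[of k X a b] by simp
lemma mmul_Ki_right': "mmul (Suc (2*k)) X (Ki k) a b = (if b < Suc (2*k) then
   (if b = k then X a b else rr * X a b - \<i> * rr * X a (2*k-b)) else 0)"
  using mmul_Ki_right[of k X a b] by simp

lemma phi_entry: "phi k X a b = (if a < Suc (2*k) \<and> b < Suc (2*k) then
   (if a = k then (if b = k then X a b else rr * X a b - \<i> * rr * X a (2*k-b))
    else if b = k then rr * X a b + \<i> * rr * X (2*k-a) b
    else (X a b + \<i> * X (2*k-a) b - \<i> * X a (2*k-b) + X (2*k-a) (2*k-b)) / 2) else 0)"
proof -
  have h: "rr * (rr * z) = z / 2" for z using rr_sq by (metis mult.assoc mult.commute times_divide_eq_right mult.right_neutral divide_inverse)
  show ?thesis unfolding adq_def mmul_Ki_right' mmul_Km_left'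
    by (auto simp: algebra_simps h add_divide_distrib diff_divide_distrib)
qed

definition lay :: "nat \<Rightarrow> nat \<Rightarrow> nat" where "lay k a = min a (2*k - a)"

definition uu :: "cmat \<Rightarrow> nat \<Rightarrow> nat \<Rightarrow> real" where "uu X k j = Im (X j (2*k - j))"
definition vv :: "cmat \<Rightarrow> nat \<Rightarrow> nat \<Rightarrow> real" where "vv X k j = Im (X (2*k - j) j)"

definition al2 :: "nat \<Rightarrow> cmat \<Rightarrow> nat \<Rightarrow> real" where "al2 k X j = (uu X k j + vv X k j) / 2"
definition lm2 :: "nat \<Rightarrow> cmat \<Rightarrow> nat \<Rightarrow> real" where "lm2 k X j = (vv X k j - uu X k j) / 2"
definition Ml2 :: "nat \<Rightarrow> cmat \<Rightarrow> nat \<Rightarrow> real" where "Ml2 k X j = lm2 k X j + cc k * (\<Sum>l<k. lm2 k X l)"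

definition J2e :: "nat \<Rightarrow> cmat \<Rightarrow> cmat" where
  "J2e k X = (\<lambda>a b. if a < Suc (2*k) \<and> b < Suc (2*k) then
     (if lay k a < lay k b then (if a < k then - \<i> * X (2*k - a) b else \<i> * X (2*k - a) b)
      else if lay k b < lay k a then (if b < k then - \<i> * X a (2*k - b) else \<i> * X a (2*k - b))
      else if a = b then dg k (al2 k X) (Ml2 k X) a
      else if a < b then \<i> * complex_of_real (al X a - Lam k X a)
      else \<i> * complex_of_real (al X b + Lam k X b)) else 0)"

lemma Lp_imag:
  assumes x: "X \<in> Lp k" and j: "j < k"
  shows "X j (2*k - j) = \<i> * complex_of_real (uu X k j)" "X (2*k - j) j = \<i> * complex_of_real (vv X k j)"
proof -
  have "X j (2*k - j) = - cnj (X j (2*k - j))" using Lp_entry[OF x, of j "2*k - j"] j by simp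
  then show "X j (2*k - j) = \<i> * complex_of_real (uu X k j)" unfolding uu_def by (simp add: complex_eq_iff)
  have "X (2*k - j) j = - cnj (X (2*k - j) j)" using Lp_entry[OF x, of "2*k - j" j] j by simp
  then show "X (2*k - j) j = \<i> * complex_of_real (vv X k j)" unfolding vv_def by (simp add: complex_eq_iff)
qed

lemma Lp_jj: "X \<in> Lp k \<Longrightarrow> j < k \<Longrightarrow> X j j = Complex (al X j) (be X j)"
  unfolding al_def be_def by simp
lemma Lp_jsjs: "X \<in> Lp k \<Longrightarrow> j < k \<Longrightarrow> X (2*k - j) (2*k - j) = Complex (- al X j) (be X j)"
  using Lp_entry[of X k "2*k - j" "2*k - j"] unfolding al_def be_def by (simp add: complex_eq_iff)

lemma phi_diag:
  assumes x: "X \<in> Lp k" and j: "j < k"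
  shows "phi k X j j = Complex ((uu X k j - vv X k j) / 2) (be X j)"
    "phi k X (2*k - j) (2*k - j) = Complex (- (uu X k j - vv X k j) / 2) (be X j)"
    "phi k X j (2*k - j) = \<i> * complex_of_real ((uu X k j + vv X k j) / 2 - al X j)"
    "phi k X (2*k - j) j = \<i> * complex_of_real ((uu X k j + vv X k j) / 2 + al X j)"
  using j Lp_imag[OF x j] Lp_jj[OF x j] Lp_jsjs[OF x j]
  by (auto simp: phi_entry complex_eq_iff)


lemma J2e_phi_A1:
  assumes y: "Y \<in> Lp k" and a: "a < k" and ab: "a < b" and ba: "b < 2*k - a"
  shows "J2e k (phi k Y) a b = phi k (J1p k Y) a b"
proof -
  have l: "lay k a < lay k b" unfolding lay_def using a ab ba by auto
  have f: "a < Suc (2*k)" "b < Suc (2*k)" "2*k - a < Suc (2*k)" "2*k - b < Suc (2*k)" "2*k - (2*k - a) = a"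
    "2*k - (2*k - b) = b" "a \<noteq> k" "2*k - a \<noteq> k" "a < 2*k - b" "b < 2*k - a" "2*k - b < 2*k - a"
    using a ab ba by auto
  show ?thesis
    unfolding J2e_def using l f a ab ba
    by (cases "b = k"; simp add: phi_entry J1p_def; simp add: algebra_simps add_divide_distrib diff_divide_distrib)
qed

lemma J2e_phi_A2:
  assumes y: "Y \<in> Lp k" and a: "k < a" and a2: "a \<le> 2*k" and ab: "2*k - a < b" and ba: "b < a"
  shows "J2e k (phi k Y) a b = phi k (J1p k Y) a b"
proof -
  have l: "lay k a < lay k b" unfolding lay_def using a a2 ab ba by auto
  have f: "a < Suc (2*k)" "b < Suc (2*k)" "2*k - a < Suc (2*k)" "2*k - b < Suc (2*k)" "2*k - (2*k - a) = a"
    "2*k - (2*k - b) = b" "a \<noteq> k" "2*k - a \<noteq> k" "2*k - a < 2*k - b" "2*k - b < a" "\<not> a < k"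
    using a a2 ab ba by auto
  show ?thesis
    unfolding J2e_def using l f a a2 ab ba
    by (cases "b = k"; simp add: phi_entry J1p_def; simp add: algebra_simps add_divide_distrib diff_divide_distrib)
qed

lemma J2e_phi_B1:
  assumes y: "Y \<in> Lp k" and b: "b < k" and ab: "b < a" and ba: "a < 2*k - b"
  shows "J2e k (phi k Y) a b = phi k (J1p k Y) a b"
proof -
  have l: "lay k b < lay k a" "\<not> lay k a < lay k b" unfolding lay_def using b ab ba by auto
  have f: "a < Suc (2*k)" "b < Suc (2*k)" "2*k - a < Suc (2*k)" "2*k - b < Suc (2*k)" "2*k - (2*k - a) = a"
    "2*k - (2*k - b) = b" "b \<noteq> k" "2*k - b \<noteq> k" "b < 2*k - a" "a < 2*k - b" "2*k - a < 2*k - b"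
    using b ab ba by auto
  show ?thesis
    unfolding J2e_def using l f b ab ba
    by (cases "a = k"; simp add: phi_entry J1p_def; simp add: algebra_simps add_divide_distrib diff_divide_distrib)
qed

lemma J2e_phi_B2:
  assumes y: "Y \<in> Lp k" and b: "k < b" and b2: "b \<le> 2*k" and ab: "2*k - b < a" and ba: "a < b"
  shows "J2e k (phi k Y) a b = phi k (J1p k Y) a b"
proof -
  have l: "lay k b < lay k a" "\<not> lay k a < lay k b" unfolding lay_def using b b2 ab ba by auto
  have f: "a < Suc (2*k)" "b < Suc (2*k)" "2*k - a < Suc (2*k)" "2*k - b < Suc (2*k)" "2*k - (2*k - a) = a"
    "2*k - (2*k - b) = b" "b \<noteq> k" "2*k - b \<noteq> k" "2*k - b < 2*k - a" "2*k - a < b" "\<not> b < k"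
    using b b2 ab ba by auto
  show ?thesis
    unfolding J2e_def using l f b b2 ab ba
    by (cases "a = k"; simp add: phi_entry J1p_def; simp add: algebra_simps add_divide_distrib diff_divide_distrib)
qed


lemma phi_coords:
  assumes y: "Y \<in> Lp k" and j: "j < k"
  shows "uu (phi k Y) k j = (uu Y k j + vv Y k j) / 2 - al Y j"
    "vv (phi k Y) k j = (uu Y k j + vv Y k j) / 2 + al Y j"
    "al (phi k Y) j = (uu Y k j - vv Y k j) / 2"
    "be (phi k Y) j = be Y j"
  using phi_diag[OF y j] unfolding uu_def vv_def al_def be_def by auto

lemma Lam_phi': "Y \<in> Lp k \<Longrightarrow> j < k \<Longrightarrow> Lam k (phi k Y) j = Lam k Y j"
  unfolding Lam_def by (simp add: phi_coords)

lemma Ml2_phi: "Y \<in> Lp k \<Longrightarrow> j < k \<Longrightarrow> Ml2 k (phi k Y) j = Mal k Y j"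
proof -
  assume y: "Y \<in> Lp k" and j: "j < k"
  have "\<And>l. l < k \<Longrightarrow> lm2 k (phi k Y) l = al Y l" unfolding lm2_def using phi_coords[OF y] by simp
  then show ?thesis unfolding Ml2_def Mal_def using j by simp
qed

lemma al2_phi: "Y \<in> Lp k \<Longrightarrow> j < k \<Longrightarrow> al2 k (phi k Y) j = (uu Y k j + vv Y k j) / 2"
  unfolding al2_def using phi_coords by simp

lemma J1p_coords:
  assumes j: "j < k"
  shows "uu (J1p k Y) k j = uu Y k j" "vv (J1p k Y) k j = - vv Y k j"
    "al (J1p k Y) j = Lam k Y j" "be (J1p k Y) j = Mal k Y j"
  using j unfolding uu_def vv_def al_def be_def J1p_def by (auto simp: dg_re dg_im)

lemma J2e_phi_C1:
  assumes y: "Y \<in> Lp k" and j: "j < k"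
  shows "J2e k (phi k Y) j (2*k - j) = phi k (J1p k Y) j (2*k - j)"
proof -
  have l: "\<not> lay k j < lay k (2*k - j)" "\<not> lay k (2*k - j) < lay k j" unfolding lay_def by auto
  have f: "j < Suc (2*k)" "2*k - j < Suc (2*k)" "j \<noteq> 2*k - j" "j < 2*k - j" using j by auto
  have "J2e k (phi k Y) j (2*k - j) = \<i> * complex_of_real ((uu Y k j - vv Y k j) / 2 - Lam k Y j)"
    unfolding J2e_def using l f j by (simp add: phi_coords[OF y j] Lam_phi'[OF y j])
  also have "\<dots> = phi k (J1p k Y) j (2*k - j)"
    using phi_diag(3)[OF J1p_Lp[OF y] j] J1p_coords[OF j] by simp
  finally show ?thesis .
qed

lemma J2e_phi_C2:
  assumes y: "Y \<in> Lp k" and j: "j < k"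
  shows "J2e k (phi k Y) (2*k - j) j = phi k (J1p k Y) (2*k - j) j"
proof -
  have l: "\<not> lay k j < lay k (2*k - j)" "\<not> lay k (2*k - j) < lay k j" unfolding lay_def by auto
  have f: "j < Suc (2*k)" "2*k - j < Suc (2*k)" "2*k - j \<noteq> j" "\<not> 2*k - j < j" using j by auto
  have "J2e k (phi k Y) (2*k - j) j = \<i> * complex_of_real ((uu Y k j - vv Y k j) / 2 + Lam k Y j)"
    unfolding J2e_def using l f j by (simp add: phi_coords[OF y j] Lam_phi'[OF y j])
  also have "\<dots> = phi k (J1p k Y) (2*k - j) j"
    using phi_diag(4)[OF J1p_Lp[OF y] j] J1p_coords[OF j] by simp
  finally show ?thesis .
qed

lemma J2e_phi_D:
  assumes y: "Y \<in> Lp k" and a: "a < Suc (2*k)"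
  shows "J2e k (phi k Y) a a = phi k (J1p k Y) a a"
proof -
  have z: "J1p k Y \<in> Lp k" using J1p_Lp[OF y] .
  have L: "J2e k (phi k Y) a a = dg k (al2 k (phi k Y)) (Ml2 k (phi k Y)) a"
    unfolding J2e_def using a by simp
  also have "\<dots> = dg k (\<lambda>j. (uu Y k j + vv Y k j) / 2) (Mal k Y) a"
    by (rule dg_cong) (use a al2_phi[OF y] Ml2_phi[OF y] in auto)
  finally have L: "J2e k (phi k Y) a a = dg k (\<lambda>j. (uu Y k j + vv Y k j) / 2) (Mal k Y) a" .
  show ?thesis
  proof (cases "a < k")
    case True
    then show ?thesis unfolding L using phi_diag(1)[OF z True] J1p_coords[OF True] by (simp add: dg_def)
  next
    case False
    show ?thesis
    proof (cases "a = k")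
      case True
      have "phi k (J1p k Y) k k = J1p k Y k k" by (simp add: phi_entry)
      also have "\<dots> = dg k (Lam k Y) (Mal k Y) k" unfolding J1p_def by simp
      finally have "phi k (J1p k Y) a a = dg k (Lam k Y) (Mal k Y) a" using True by simp
      then show ?thesis unfolding L using True by (simp add: dg_def)
    next
      case False
      define j where "j = 2*k - a"
      have j: "j < k" and aj: "a = 2*k - j" unfolding j_def using a False \<open>\<not> a < k\<close> by auto
      have "dg k (\<lambda>j. (uu Y k j + vv Y k j) / 2) (Mal k Y) a = Complex (- (uu Y k j + vv Y k j) / 2) (Mal k Y j)"
        unfolding dg_def using False \<open>\<not> a < k\<close> j_def by (simp add: field_simps)
      then show ?thesis using L phi_diag(2)[OF z j] J1p_coords[OF j] aj by simp
    qed
  qed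
qed


lemma J2e_phi:
  assumes y: "Y \<in> Lp k"
  shows "J2e k (phi k Y) = phi k (J1p k Y)"
proof (rule cmat_eqI)
  fix a b
  show "J2e k (phi k Y) a b = phi k (J1p k Y) a b"
  proof (cases "a < Suc (2*k) \<and> b < Suc (2*k)")
    case False
    then have "J2e k (phi k Y) a b = 0" unfolding J2e_def by auto
    moreover have "phi k (J1p k Y) a b = 0" using False by (simp only: phi_entry if_False)
    ultimately show ?thesis by simp
  next
    case True
    then have a: "a \<le> 2*k" and b: "b \<le> 2*k" by auto
    have cov: "(a < k \<and> a < b \<and> a + b < 2*k) \<or> (k < a \<and> 2*k < a + b \<and> b < a)
      \<or> (b < k \<and> b < a \<and> a + b < 2*k) \<or> (k < b \<and> 2*k < a + b \<and> a < b)
      \<or> a = b \<or> (a < k \<and> a + b = 2*k) \<or> (b < k \<and> a + b = 2*k)"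
      by linarith
    consider "a < k \<and> a < b \<and> b < 2*k - a" | "k < a \<and> 2*k - a < b \<and> b < a"
      | "b < k \<and> b < a \<and> a < 2*k - b" | "k < b \<and> 2*k - b < a \<and> a < b"
      | "a = b" | "a < k \<and> b = 2*k - a" | "b < k \<and> a = 2*k - b"
    proof -
      from cov a b show ?thesis
      proof (elim disjE)
        assume "a < k \<and> a < b \<and> a + b < 2*k" then show ?thesis using that(1) by auto
      next
        assume "k < a \<and> 2*k < a + b \<and> b < a" then show ?thesis using that(2) a by auto
      next
        assume "b < k \<and> b < a \<and> a + b < 2*k" then show ?thesis using that(3) by auto
      next
        assume "k < b \<and> 2*k < a + b \<and> a < b" then show ?thesis using that(4) b by auto
      next
        assume "a = b" then show ?thesis using that(5) by auto
      next
        assume "a < k \<and> a + b = 2*k" then show ?thesis using that(6) by auto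
      next
        assume "b < k \<and> a + b = 2*k" then show ?thesis using that(7) by auto
      qed
    qed
    then show ?thesis
    proof cases
      case 1 then show ?thesis using J2e_phi_A1[OF y] by blast
    next
      case 2 then show ?thesis using J2e_phi_A2[OF y] a by blast
    next
      case 3 then show ?thesis using J2e_phi_B1[OF y] by blast
    next
      case 4 then show ?thesis using J2e_phi_B2[OF y] b by blast
    next
      case 5 then show ?thesis using J2e_phi_D[OF y] True by blast
    next
      case 6 then show ?thesis using J2e_phi_C1[OF y] by blast
    next
      case 7 then show ?thesis using J2e_phi_C2[OF y] by blast
    qed
  qed
qed


lemma Lam_J1p: "0 < k \<Longrightarrow> j < k \<Longrightarrow> Lam k (J1p k X) j = al X j"
proof -
  assume k: "0 < k" and j: "j < k"
  have sb: "(\<Sum>l<k. be (J1p k X) l) = (\<Sum>l<k. Mal k X l)" using be_J1p by simp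
  have "Lam k (J1p k X) j = Mal k X j + cp k * (\<Sum>l<k. Mal k X l)"
    unfolding Lam_def sb using be_J1p[OF j] by simp
  also have "\<dots> = al X j + (\<Sum>l<k. al X l) * (cc k + cp k + real k * cc k * cp k)"
    unfolding Mal_def sum_shift by (simp add: algebra_simps)
  finally show ?thesis using cc_cp[OF k] by simp
qed

lemma J2e_diag_coords:
  assumes j: "j < k"
  shows "al (J2e k X) j = al2 k X j" "be (J2e k X) j = Ml2 k X j"
  using j unfolding al_def be_def J2e_def by (auto simp: dg_re dg_im)

lemma Lam_J2e: "0 < k \<Longrightarrow> j < k \<Longrightarrow> Lam k (J2e k X) j = lm2 k X j"
proof -
  assume k: "0 < k" and j: "j < k"
  have sb: "(\<Sum>l<k. be (J2e k X) l) = (\<Sum>l<k. Ml2 k X l)" using J2e_diag_coords by simp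
  have "Lam k (J2e k X) j = Ml2 k X j + cp k * (\<Sum>l<k. Ml2 k X l)"
    unfolding Lam_def sb using J2e_diag_coords[OF j] by simp
  also have "\<dots> = lm2 k X j + (\<Sum>l<k. lm2 k X l) * (cc k + cp k + real k * cc k * cp k)"
    unfolding Ml2_def sum_shift by (simp add: algebra_simps)
  finally show ?thesis using cc_cp[OF k] by simp
qed

lemma Mal_J2e: "j < k \<Longrightarrow> Mal k (J2e k X) j = al2 k X j + cc k * (\<Sum>l<k. al2 k X l)"
  unfolding Mal_def using J2e_diag_coords by simp

lemma al2_J1p: "j < k \<Longrightarrow> al2 k (J1p k X) j = - lm2 k X j"
  unfolding al2_def lm2_def using J1p_coords by (simp add: field_simps)

lemma Ml2_J1p: "j < k \<Longrightarrow> Ml2 k (J1p k X) j = - Mal k (J2e k X) j"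
proof -
  assume j: "j < k"
  have "\<And>l. l < k \<Longrightarrow> lm2 k (J1p k X) l = - al2 k X l"
    unfolding al2_def lm2_def using J1p_coords by (simp add: field_simps)
  then show ?thesis unfolding Ml2_def Mal_J2e[OF j] using j by (simp add: sum_negf)
qed

lemma dg_neg: "dg k (\<lambda>j. - p j) (\<lambda>j. - q j) a = - dg k p q a"
  unfolding dg_def by (auto simp: complex_eq_iff sum_negf)

lemma anti_A1:
  assumes a: "a < k" and ab: "a < b" and ba: "b < 2*k - a"
  shows "J1p k (J2e k X) a b = - J2e k (J1p k X) a b"
proof -
  have l: "lay k a < lay k b" unfolding lay_def using a ab ba by auto
  have f: "a < Suc (2*k)" "b < Suc (2*k)" "2*k - a < Suc (2*k)" "2*k - (2*k - a) = a"
    "b < 2*k - a" "\<not> 2*k - a < b" "2*k - a \<noteq> b" "a \<noteq> b"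
    using a ab ba by auto
  show ?thesis unfolding J1p_def J2e_def using l f a ab ba by simp
qed

lemma anti_A2:
  assumes a: "k < a" and a2: "a \<le> 2*k" and ab: "2*k - a < b" and ba: "b < a"
  shows "J1p k (J2e k X) a b = - J2e k (J1p k X) a b"
proof -
  have l: "lay k a < lay k b" unfolding lay_def using a a2 ab ba by auto
  have f: "a < Suc (2*k)" "b < Suc (2*k)" "2*k - a < Suc (2*k)" "2*k - (2*k - a) = a"
    "2*k - a < b" "\<not> b < 2*k - a" "2*k - a \<noteq> b" "a \<noteq> b" "\<not> a < k" "\<not> a < b"
    using a a2 ab ba by auto
  show ?thesis unfolding J1p_def J2e_def using l f a ab ba by simp
qed

lemma anti_B1:
  assumes b: "b < k" and ab: "b < a" and ba: "a < 2*k - b"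
  shows "J1p k (J2e k X) a b = - J2e k (J1p k X) a b"
proof -
  have l: "lay k b < lay k a" "\<not> lay k a < lay k b" unfolding lay_def using b ab ba by auto
  have f: "a < Suc (2*k)" "b < Suc (2*k)" "2*k - b < Suc (2*k)" "2*k - (2*k - b) = b"
    "a < 2*k - b" "\<not> 2*k - b < a" "2*k - b \<noteq> a" "a \<noteq> b" "\<not> a < b"
    using b ab ba by auto
  show ?thesis unfolding J1p_def J2e_def using l f b ab ba by simp
qed

lemma anti_B2:
  assumes b: "k < b" and b2: "b \<le> 2*k" and ab: "2*k - b < a" and ba: "a < b"
  shows "J1p k (J2e k X) a b = - J2e k (J1p k X) a b"
proof -
  have l: "lay k b < lay k a" "\<not> lay k a < lay k b" unfolding lay_def using b b2 ab ba by auto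
  have f: "a < Suc (2*k)" "b < Suc (2*k)" "2*k - b < Suc (2*k)" "2*k - (2*k - b) = b"
    "2*k - b < a" "\<not> a < 2*k - b" "2*k - b \<noteq> a" "a \<noteq> b" "\<not> b < k" "\<not> b < a"
    using b b2 ab ba by auto
  show ?thesis unfolding J1p_def J2e_def using l f b ab ba by simp
qed

lemma anti_C1:
  assumes k: "0 < k" and j: "j < k"
  shows "J1p k (J2e k X) j (2*k - j) = - J2e k (J1p k X) j (2*k - j)"
proof -
  have l: "\<not> lay k j < lay k (2*k - j)" "\<not> lay k (2*k - j) < lay k j" unfolding lay_def by auto
  have f: "j < Suc (2*k)" "2*k - j < Suc (2*k)" "j \<noteq> 2*k - j" "j < 2*k - j" using j by auto
  have "J1p k (J2e k X) j (2*k - j) = \<i> * complex_of_real (al X j - Lam k X j)"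
    unfolding J1p_def using f by (simp add: J2e_def l f)
  moreover have "J2e k (J1p k X) j (2*k - j) = \<i> * complex_of_real (Lam k X j - al X j)"
    unfolding J2e_def using l f by (simp add: Lam_J1p[OF k j] al_J1p[OF j])
  ultimately show ?thesis by (metis minus_diff_eq of_real_diff mult_minus_right)
qed

lemma anti_C2:
  assumes k: "0 < k" and j: "j < k"
  shows "J1p k (J2e k X) (2*k - j) j = - J2e k (J1p k X) (2*k - j) j"
proof -
  have l: "\<not> lay k j < lay k (2*k - j)" "\<not> lay k (2*k - j) < lay k j" unfolding lay_def by auto
  have f: "j < Suc (2*k)" "2*k - j < Suc (2*k)" "2*k - j \<noteq> j" "\<not> 2*k - j < j" "j < 2*k - j" using j by auto
  have "J1p k (J2e k X) (2*k - j) j = - (\<i> * complex_of_real (al X j + Lam k X j))"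
    unfolding J1p_def using f by (simp add: J2e_def l f)
  moreover have "J2e k (J1p k X) (2*k - j) j = \<i> * complex_of_real (al X j + Lam k X j)"
    unfolding J2e_def using l f by (simp add: Lam_J1p[OF k j] al_J1p[OF j])
  ultimately show ?thesis by (simp add: algebra_simps)
qed

lemma anti_D:
  assumes k: "0 < k" and a: "a < Suc (2*k)"
  shows "J1p k (J2e k X) a a = - J2e k (J1p k X) a a"
proof -
  have "J1p k (J2e k X) a a = dg k (Lam k (J2e k X)) (Mal k (J2e k X)) a"
    unfolding J1p_def using a by simp
  also have "\<dots> = dg k (lm2 k X) (Mal k (J2e k X)) a"
    by (rule dg_cong) (use a Lam_J2e[OF k] in auto)
  finally have L: "J1p k (J2e k X) a a = dg k (lm2 k X) (Mal k (J2e k X)) a" .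
  have "J2e k (J1p k X) a a = dg k (al2 k (J1p k X)) (Ml2 k (J1p k X)) a"
    unfolding J2e_def using a by simp
  also have "\<dots> = dg k (\<lambda>j. - lm2 k X j) (\<lambda>j. - Mal k (J2e k X) j) a"
    by (rule dg_cong) (use a al2_J1p Ml2_J1p in auto)
  finally have R: "J2e k (J1p k X) a a = - dg k (lm2 k X) (Mal k (J2e k X)) a" unfolding dg_neg .
  show ?thesis unfolding L R by simp
qed

lemma J1p_J2e_anti:
  assumes k: "0 < k"
  shows "J1p k (J2e k X) = - J2e k (J1p k X)"
proof (rule cmat_eqI)
  fix a b
  show "J1p k (J2e k X) a b = (- J2e k (J1p k X)) a b"
  proof (cases "a < Suc (2*k) \<and> b < Suc (2*k)")
    case False
    then have "J1p k (J2e k X) a b = 0" "J2e k (J1p k X) a b = 0" unfolding J1p_def J2e_def by auto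
    then show ?thesis by simp
  next
    case True
    then have a: "a \<le> 2*k" and b: "b \<le> 2*k" by auto
    have cov: "(a < k \<and> a < b \<and> a + b < 2*k) \<or> (k < a \<and> 2*k < a + b \<and> b < a)
      \<or> (b < k \<and> b < a \<and> a + b < 2*k) \<or> (k < b \<and> 2*k < a + b \<and> a < b)
      \<or> a = b \<or> (a < k \<and> a + b = 2*k) \<or> (b < k \<and> a + b = 2*k)"
      by linarith
    from cov show ?thesis
    proof (elim disjE)
      assume "a < k \<and> a < b \<and> a + b < 2*k" then show ?thesis using anti_A1[of a k b X] by auto
    next
      assume "k < a \<and> 2*k < a + b \<and> b < a" then show ?thesis using anti_A2[of k a b X] a by auto
    next
      assume "b < k \<and> b < a \<and> a + b < 2*k" then show ?thesis using anti_B1[of b k a X] by auto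
    next
      assume "k < b \<and> 2*k < a + b \<and> a < b" then show ?thesis using anti_B2[of k b a X] b by auto
    next
      assume "a = b" then show ?thesis using anti_D[OF k, of a X] True by auto
    next
      assume h: "a < k \<and> a + b = 2*k"
      then have "b = 2*k - a" by auto
      then show ?thesis using anti_C1[OF k, of a X] h by auto
    next
      assume h: "b < k \<and> a + b = 2*k"
      then have "a = 2*k - b" by auto
      then show ?thesis using anti_C2[OF k, of b X] h by auto
    qed
  qed
qed


lemma transp_K': "transp (Suc (2*k)) (Km k) (Ki k) (Sm k) (Sm k) (Lp k) (Lp k)"
  using transp_K[of k] by simp
lemma transp_P': "transp (Suc (2*k)) (Pm k) (Pm k) (Sm k) (Ip k) (Lp k) (liealg (Suc (2*k)) (Ip k))"
  using transp_P[of k] by simp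

lemma J2e_trp: "X \<in> Lp k \<Longrightarrow> J2e k X = trp (Suc (2*k)) (Km k) (Ki k) (J1p k) X"
proof -
  assume x: "X \<in> Lp k"
  define Y where "Y = adq (Suc (2*k)) (Ki k) (Km k) X"
  have y: "Y \<in> Lp k" unfolding Y_def using transp.to1[OF transp_K' x] .
  have X: "X = phi k Y" unfolding Y_def using transp.backq[OF transp_K' x] by simp
  have "J2e k X = phi k (J1p k Y)" unfolding X using J2e_phi[OF y] .
  then show ?thesis unfolding trp_def Y_def X[symmetric] .
qed

lemma lin_cong:
  assumes LL: "L = liealg n S" and lin: "lin_endo L J'" and eq: "\<And>X. X \<in> L \<Longrightarrow> J X = J' X"
  shows "lin_endo L J"
  unfolding lin_endo_def
proof (intro conjI ballI allI)
  fix X assume "X \<in> L" then show "J X \<in> L" using eq le_in[OF LL lin] by simp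
next
  fix X Y a assume x: "X \<in> L" and y: "Y \<in> L"
  have "msc a X + Y \<in> L" using LL liealg_lincomb x y by simp
  then show "J (msc a X + Y) = msc a (J X) + J Y" using eq x y lin unfolding lin_endo_def by simp
qed

lemma nij_cong:
  assumes LL: "L = liealg n S" and lin: "lin_endo L J'" and eq: "\<And>X. X \<in> L \<Longrightarrow> J X = J' X"
    and x: "X \<in> L" and y: "Y \<in> L"
  shows "nijenhuis n J X Y = nijenhuis n J' X Y"
proof -
  have inJ: "\<And>U. U \<in> L \<Longrightarrow> J' U \<in> L" using le_in[OF LL lin] .
  have inb: "\<And>U V. U \<in> L \<Longrightarrow> V \<in> L \<Longrightarrow> brk n U V \<in> L" using LL liealg_brk by simp
  show ?thesis unfolding nijenhuis_def using x y by (simp add: eq inJ inb)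
qed

lemma lin_comp:
  assumes LL: "L = liealg n S" and la: "lin_endo L A" and lb: "lin_endo L B"
  shows "lin_endo L (\<lambda>X. A (B X))"
  unfolding lin_endo_def
proof (intro conjI ballI allI)
  fix X assume "X \<in> L" then show "A (B X) \<in> L" using le_in[OF LL la] le_in[OF LL lb] by simp
next
  fix X Y a assume x: "X \<in> L" and y: "Y \<in> L"
  have "B (msc a X + Y) = msc a (B X) + B Y" using lb x y unfolding lin_endo_def by simp
  then show "A (B (msc a X + Y)) = msc a (A (B X)) + A (B Y)"
    using la le_in[OF LL lb] x y unfolding lin_endo_def by simp
qed

lemma hyper_Lp:
  assumes k: "0 < k"
  shows "hyper_paracomplex (Suc (2*k)) (Lp k) (J1p k) (J2e k) (\<lambda>X. J1p k (J2e k X)) \<and>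
    hyperparahermitian (Lp k) (Bform (Suc (2*k))) (J1p k) (J2e k) (\<lambda>X. J1p k (J2e k X))"
proof -
  let ?n = "Suc (2*k)"
  let ?T = "trp ?n (Km k) (Ki k) (J1p k)"
  have l1: "lin_endo (Lp k) (J1p k)" using J1p_lin_endo .
  have lT: "lin_endo (Lp k) ?T" using transp.tr_lin[OF transp_K' l1] .
  have l2: "lin_endo (Lp k) (J2e k)" using lin_cong[OF Lp_alt lT] J2e_trp by blast
  have l3: "lin_endo (Lp k) (\<lambda>X. J1p k (J2e k X))" using lin_comp[OF Lp_alt l1 l2] .
  have in2: "\<And>X. X \<in> Lp k \<Longrightarrow> J2e k X \<in> Lp k" using le_in[OF Lp_alt l2] .
  have sq1: "\<And>X. X \<in> Lp k \<Longrightarrow> J1p k (J1p k X) = X" using J1p_sq[OF _ k] .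
  have sq2: "J2e k (J2e k X) = X" if x: "X \<in> Lp k" for X
  proof -
    have "J2e k (J2e k X) = ?T (?T X)" using J2e_trp in2[OF x] x by simp
    also have "\<dots> = adq ?n (Km k) (Ki k) (J1p k (J1p k (adq ?n (Ki k) (Km k) X)))"
      using transp.tr_comp[OF transp_K' l1 x] .
    also have "\<dots> = X" using sq1 transp.to1[OF transp_K' x] transp.backq[OF transp_K' x] by simp
    finally show ?thesis .
  qed
  have anti: "\<And>X. J2e k (J1p k X) = - J1p k (J2e k X)"
    using J1p_J2e_anti[OF k] by (metis minus_minus)
  have neg1: "\<And>X. X \<in> Lp k \<Longrightarrow> J1p k (- X) = - J1p k X" using le_uminus[OF Lp_alt l1] .
  have sq3: "\<And>X. X \<in> Lp k \<Longrightarrow> J1p k (J2e k (J1p k (J2e k X))) = - X"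
    using anti sq1 sq2 neg1 in2 J1p_Lp by simp
  have iso1: "\<And>X Y. X \<in> Lp k \<Longrightarrow> Y \<in> Lp k \<Longrightarrow> Bform ?n (J1p k X) (J1p k Y) = - Bform ?n X Y"
    using J1p_iso k by blast
  have iso2: "Bform ?n (J2e k X) (J2e k Y) = - Bform ?n X Y" if x: "X \<in> Lp k" and y: "Y \<in> Lp k" for X Y
    using transp.tr_iso[OF transp_K' l1, of "-1" X Y] iso1 x y J2e_trp by simp
  have nij1: "\<And>X Y. X \<in> Lp k \<Longrightarrow> Y \<in> Lp k \<Longrightarrow> nijenhuis ?n (J1p k) X Y = 0"
    using J1p_nij[OF k] by blast
  have nij2: "nijenhuis ?n (J2e k) X Y = 0" if x: "X \<in> Lp k" and y: "Y \<in> Lp k" for X Y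
    using nij_cong[OF Lp_alt lT J2e_trp x y] transp.tr_nij[OF transp_K' l1 nij1 x y] by simp
  have nij3: "nijenhuis ?n (\<lambda>X. J1p k (J2e k X)) X Y = 0" if x: "X \<in> Lp k" and y: "Y \<in> Lp k" for X Y
    apply (rule third_integrable[OF Lp_alt l1 l2]) using sq1 sq2 anti nij1 nij2 x y by auto
  show ?thesis
    unfolding hyper_paracomplex_def almost_hyper_paracomplex_def hyperparahermitian_def
    using l1 l2 l3 sq1 sq2 sq3 anti nij1 nij2 nij3 iso1 iso2 in2 by auto
qed

lemma hyper_L:
  assumes k: "0 < k"
  shows "\<exists>J1 J2 J3. hyper_paracomplex (Suc (2*k)) (liealg (Suc (2*k)) (Ip k)) J1 J2 J3 \<and>
    hyperparahermitian (liealg (Suc (2*k)) (Ip k)) (Bform (Suc (2*k))) J1 J2 J3"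
  using transp.tr_hyper[OF transp_P'] hyper_Lp[OF k] by blast


section \<open>Reality of the trace form\<close>

lemma mtrace_madj: "mtrace n (madj A) = cnj (mtrace n A)"
  unfolding mtrace_def madj_def by simp

lemma Bform_real:
  assumes x: "X \<in> liealg n S" and y: "Y \<in> liealg n S" and sa: "madj S = S" and ss: "mmul n S S = idm n"
  shows "Im (Bform n X Y) = 0"
proof -
  have sx: "supp n X" and sy: "supp n Y" using x y liealg_supp by auto
  have hx: "mmul n (madj X) S = - mmul n S X" using x unfolding liealg_def by (simp add: eq_neg_iff_add_eq_0)
  have hy: "mmul n (madj Y) S = - mmul n S Y" using y unfolding liealg_def by (simp add: eq_neg_iff_add_eq_0)
  have ax: "madj X = - mmul n (mmul n S X) S"
  proof -
    have "madj X = mmul n (madj X) (mmul n S S)" using ss supp_madj[OF sx] by (simp add: mmul_idm_right)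
    also have "\<dots> = - mmul n (mmul n S X) S" by (simp add: mmul_assoc[symmetric] hx mmul_lin)
    finally show ?thesis .
  qed
  have ay: "madj Y = - mmul n (mmul n S Y) S"
  proof -
    have "madj Y = mmul n (madj Y) (mmul n S S)" using ss supp_madj[OF sy] by (simp add: mmul_idm_right)
    also have "\<dots> = - mmul n (mmul n S Y) S" by (simp add: mmul_assoc[symmetric] hy mmul_lin)
    finally show ?thesis .
  qed
  have "cnj (mtrace n (mmul n X Y)) = mtrace n (mmul n (madj Y) (madj X))"
    by (simp add: mtrace_madj[symmetric] madj_mmul)
  also have "\<dots> = mtrace n (mmul n (mmul n S Y) (mmul n (mmul n S S) (mmul n X S)))"
    unfolding ax ay by (simp add: mmul_lin mmul_assoc)
  also have "\<dots> = mtrace n (mmul n (mmul n S (mmul n Y X)) S)"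
  proof -
    have hh: "mmul n Y (mmul n (idm n) W) = mmul n Y W" for W
      using sy by (simp add: mmul_assoc[symmetric] mmul_idm_right)
    show ?thesis using ss by (simp add: mmul_assoc hh)
  qed
  also have "\<dots> = mtrace n (mmul n (mmul n S S) (mmul n Y X))"
    by (metis mmul_assoc mtrace_comm)
  also have "\<dots> = mtrace n (mmul n X Y)"
    using ss supp_mmul[OF sy sx] by (simp add: mmul_idm_left mtrace_comm)
  finally have "cnj (mtrace n (mmul n X Y)) = mtrace n (mmul n X Y)" .
  then have "Im (mtrace n (mmul n X Y)) = 0" by (metis Reals_cnj_iff complex_is_Real_iff)
  then show ?thesis unfolding Bform_def by simp
qed

lemma madj_Ip: "madj (Ipq (Suc k) k) = Ipq (Suc k) k" unfolding madj_def Ipq_def by (intro ext) auto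

lemma mmul_Ip_left': "mmul (Suc (2*k)) (Ipq (Suc k) k) X a b = (if a < Suc (2*k) then (if a \<le> k then X a b else - X a b) else 0)"
  using mmul_Ip_left[of k X a b] by simp
lemma mmul_Ip_right': "mmul (Suc (2*k)) X (Ipq (Suc k) k) a b = (if b < Suc (2*k) then (if b \<le> k then X a b else - X a b) else 0)"
  using mmul_Ip_right[of k X a b] by simp

lemma Ip_sq: "mmul (Suc (2*k)) (Ipq (Suc k) k) (Ipq (Suc k) k) = idm (Suc (2*k))"
proof (rule cmat_eqI)
  fix i j
  show "mmul (Suc (2*k)) (Ipq (Suc k) k) (Ipq (Suc k) k) i j = idm (Suc (2*k)) i j"
    unfolding mmul_Ip_left' by (auto simp: Ipq_def idm_def)
qed

section \<open>Nondegeneracy\<close>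

definition eps :: "nat \<Rightarrow> nat \<Rightarrow> complex" where "eps k i = (if i \<le> k then 1 else -1)"

lemma eps_sq: "eps k i * eps k i = 1" unfolding eps_def by simp
lemma cnj_eps: "cnj (eps k i) = eps k i" unfolding eps_def by simp

lemma liealg_Ip_iff:
  "X \<in> liealg (Suc (2*k)) (Ip k) \<longleftrightarrow> supp (Suc (2*k)) X \<and> mtrace (Suc (2*k)) X = 0 \<and>
     (\<forall>i j. i < Suc (2*k) \<longrightarrow> j < Suc (2*k) \<longrightarrow> cnj (X j i) * eps k j + eps k i * X i j = 0)"
proof -
  have "mmul (Suc (2*k)) (madj X) (Ip k) + mmul (Suc (2*k)) (Ip k) X = 0 \<longleftrightarrow>
     (\<forall>i j. i < Suc (2*k) \<longrightarrow> j < Suc (2*k) \<longrightarrow> cnj (X j i) * eps k j + eps k i * X i j = 0)"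
    if sx: "supp (Suc (2*k)) X"
  proof
    assume h: "mmul (Suc (2*k)) (madj X) (Ip k) + mmul (Suc (2*k)) (Ip k) X = 0"
    show "\<forall>i j. i < Suc (2*k) \<longrightarrow> j < Suc (2*k) \<longrightarrow> cnj (X j i) * eps k j + eps k i * X i j = 0"
    proof (intro allI impI)
      fix i j assume i: "i < Suc (2*k)" and j: "j < Suc (2*k)"
      have "(mmul (Suc (2*k)) (madj X) (Ip k) + mmul (Suc (2*k)) (Ip k) X) i j = 0" using h by simp
      then show "cnj (X j i) * eps k j + eps k i * X i j = 0"
        using i j by (auto simp: mmul_Ip_left' mmul_Ip_right' madj_def eps_def)
    qed
  next
    assume h: "\<forall>i j. i < Suc (2*k) \<longrightarrow> j < Suc (2*k) \<longrightarrow> cnj (X j i) * eps k j + eps k i * X i j = 0"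
    show "mmul (Suc (2*k)) (madj X) (Ip k) + mmul (Suc (2*k)) (Ip k) X = 0"
    proof (rule cmat_eqI)
      fix i j
      show "(mmul (Suc (2*k)) (madj X) (Ip k) + mmul (Suc (2*k)) (Ip k) X) i j = 0 i j"
        using h[rule_format, of i j] sx by (auto simp: mmul_Ip_left' mmul_Ip_right' madj_def eps_def supp_def)
    qed
  qed
  then show ?thesis unfolding liealg_def by blast
qed

definition Yoff :: "nat \<Rightarrow> nat \<Rightarrow> nat \<Rightarrow> complex \<Rightarrow> cmat" where
  "Yoff k a b c = (\<lambda>i j. if i = a \<and> j = b then c else if i = b \<and> j = a then - eps k a * eps k b * cnj c else 0)"

definition Ydg :: "nat \<Rightarrow> nat \<Rightarrow> cmat" where
  "Ydg a b = (\<lambda>i j. if i = j \<and> i = a then \<i> else if i = j \<and> i = b then - \<i> else 0)"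

lemma Yoff_in:
  assumes a: "a < Suc (2*k)" and b: "b < Suc (2*k)" and ab: "a \<noteq> b"
  shows "Yoff k a b c \<in> liealg (Suc (2*k)) (Ip k)"
  unfolding liealg_Ip_iff
proof (intro conjI allI impI)
  show "supp (Suc (2*k)) (Yoff k a b c)" unfolding supp_def Yoff_def using a b by auto
  have "\<And>i. Yoff k a b c i i = 0" unfolding Yoff_def using ab by auto
  then show "mtrace (Suc (2*k)) (Yoff k a b c) = 0" unfolding mtrace_def by simp
  fix i j
  have e: "eps k a * (eps k b * (eps k b * x)) = eps k a * x" "eps k b * (eps k a * (eps k a * x)) = eps k b * x" for x
    using eps_sq by (metis mult.assoc mult.commute mult.left_neutral)+
  show "cnj (Yoff k a b c j i) * eps k j + eps k i * Yoff k a b c i j = 0"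
    unfolding Yoff_def using ab by (auto simp: eps_def)
qed

lemma Ydg_in:
  assumes a: "a < Suc (2*k)" and b: "b < Suc (2*k)" and ab: "a \<noteq> b"
  shows "Ydg a b \<in> liealg (Suc (2*k)) (Ip k)"
  unfolding liealg_Ip_iff
proof (intro conjI allI impI)
  show "supp (Suc (2*k)) (Ydg a b)" unfolding supp_def Ydg_def using a b by auto
  have "mtrace (Suc (2*k)) (Ydg a b) = (\<Sum>i<Suc (2*k). (if i = a then \<i> else 0) + (if i = b then - \<i> else 0))"
    unfolding mtrace_def Ydg_def using ab by (intro sum.cong) auto
  then show "mtrace (Suc (2*k)) (Ydg a b) = 0" using a b by (simp add: sum.distrib)
  fix i j
  show "cnj (Ydg a b j i) * eps k j + eps k i * Ydg a b i j = 0"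
    unfolding Ydg_def using ab by (auto simp: algebra_simps)
qed

lemma Bform_Yoff:
  assumes a: "a < n" and b: "b < n" and ab: "a \<noteq> b"
  shows "Bform n X (Yoff k a b c) = (X b a * c + X a b * (- eps k a * eps k b * cnj c)) / 2"
proof -
  have inner: "(\<Sum>j<n. X i j * Yoff k a b c j i) = (if i = b then X b a * c else if i = a then X a b * (- eps k a * eps k b * cnj c) else 0)" for i
  proof -
    have "(\<Sum>j<n. X i j * Yoff k a b c j i) = (\<Sum>j<n. (if j = a \<and> i = b then X i a * c else 0) + (if j = b \<and> i = a then X i b * (- eps k a * eps k b * cnj c) else 0))"
      unfolding Yoff_def using ab by (intro sum.cong) auto
    also have "\<dots> = (if i = b then X i a * c else 0) + (if i = a then X i b * (- eps k a * eps k b * cnj c) else 0)"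
      using a b by (simp add: sum.distrib)
    finally show ?thesis using ab by auto
  qed
  have "(\<Sum>i<n. \<Sum>j<n. X i j * Yoff k a b c j i) = (\<Sum>i<n. (if i = b then X b a * c else 0) + (if i = a then X a b * (- eps k a * eps k b * cnj c) else 0))"
    unfolding inner using ab by (intro sum.cong) auto
  also have "\<dots> = X b a * c + X a b * (- eps k a * eps k b * cnj c)" using a b by (simp add: sum.distrib)
  finally show ?thesis unfolding Bform_sum by simp
qed

lemma Bform_Ydg:
  assumes a: "a < n" and b: "b < n" and ab: "a \<noteq> b"
  shows "Bform n X (Ydg a b) = (X a a * \<i> - X b b * \<i>) / 2"
proof -
  have inner: "(\<Sum>j<n. X i j * Ydg a b j i) = (if i = a then X a a * \<i> else 0) + (if i = b then - X b b * \<i> else 0)" for i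
  proof -
    have "(\<Sum>j<n. X i j * Ydg a b j i) = (\<Sum>j<n. (if j = i \<and> i = a then X a a * \<i> else 0) + (if j = i \<and> i = b then - X b b * \<i> else 0))"
      unfolding Ydg_def using ab by (intro sum.cong) auto
    also have "\<dots> = (if i = a then X a a * \<i> else 0) + (if i = b then - X b b * \<i> else 0)"
      using a b by (cases "i < n") (auto simp: sum.distrib)
    finally show ?thesis .
  qed
  have "(\<Sum>i<n. \<Sum>j<n. X i j * Ydg a b j i) = X a a * \<i> - X b b * \<i>"
    unfolding inner using a b by (simp add: sum.distrib)
  then show ?thesis unfolding Bform_sum by simp
qed

lemma nondeg:
  assumes k: "0 < k" and x: "X \<in> liealg (Suc (2*k)) (Ip k)"
    and h: "\<forall>Y\<in>liealg (Suc (2*k)) (Ip k). Bform (Suc (2*k)) X Y = 0"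
  shows "X = 0"
proof -
  let ?n = "Suc (2*k)"
  have sx: "supp ?n X" using x liealg_supp by blast
  have off: "X b a = 0" if a: "a < ?n" and b: "b < ?n" and ab: "a \<noteq> b" for a b
  proof -
    have h1: "X b a * 1 + X a b * (- eps k a * eps k b * cnj 1) = 0"
      using h Yoff_in[OF a b ab, of 1] Bform_Yoff[OF a b ab, of X k 1] by simp
    have h2: "X b a * \<i> + X a b * (- eps k a * eps k b * cnj \<i>) = 0"
      using h Yoff_in[OF a b ab, of \<i>] Bform_Yoff[OF a b ab, of X k \<i>] by simp
    have "2 * \<i> * X b a = \<i> * (X b a * 1 + X a b * (- eps k a * eps k b * cnj 1)) + (X b a * \<i> + X a b * (- eps k a * eps k b * cnj \<i>))"
      by (simp add: algebra_simps)
    then have "2 * \<i> * X b a = \<i> * 0 + 0" unfolding h1 h2 .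
    then show ?thesis by simp
  qed
  have dg0: "X a a = X 0 0" if a: "a < ?n" for a
  proof (cases "a = 0")
    case False
    have z: "0 < ?n" by simp
    have "(X a a * \<i> - X 0 0 * \<i>) / 2 = 0"
      using h Ydg_in[OF a z False] Bform_Ydg[OF a z False, of X] by simp
    then show ?thesis by (simp add: algebra_simps)
  qed simp
  have "mtrace ?n X = 0" using x unfolding liealg_def by simp
  moreover have "(\<Sum>a<?n. X a a) = (\<Sum>a<?n. X 0 0)"
  proof (rule sum.cong)
    fix a assume "a \<in> {..<?n}" then show "X a a = X 0 0" by (intro dg0) simp
  qed simp
  ultimately have "(\<Sum>a<?n. X 0 0) = 0" unfolding mtrace_def by simp
  moreover have nz: "(1 + 2 * complex_of_nat k) \<noteq> 0"
  proof
    assume "1 + 2 * complex_of_nat k = 0"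
    then have "Re (1 + 2 * complex_of_nat k) = 0" by simp
    then show False by simp
  qed
  ultimately have z: "X 0 0 = 0" by simp
  show ?thesis
  proof (rule cmat_eqI)
    fix i j
    show "X i j = 0 i j"
    proof (cases "i < ?n \<and> j < ?n")
      case True
      show ?thesis
      proof (cases "i = j")
        case True then show ?thesis using dg0[of i] z \<open>i < ?n \<and> j < ?n\<close> by simp
      next
        case False then show ?thesis using off[of j i] \<open>i < ?n \<and> j < ?n\<close> by simp
      qed
    next
      case False then show ?thesis using sx unfolding supp_def by auto
    qed
  qed
qed


section \<open>Torsion\<close>

lemma Bform_uminus_left: "Bform n (- A) Z = - Bform n A Z"
  unfolding Bform_def by (simp add: mmul_lin mtrace_uminus)

lemma Bform_add_right: "Bform n Z (A + B) = Bform n Z A + Bform n Z B"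
  unfolding Bform_def by (simp add: mmul_lin mtrace_add add_divide_distrib)

lemma Bform_diff_right: "Bform n Z (A - B) = Bform n Z A - Bform n Z B"
  unfolding Bform_def by (simp add: mmul_lin mtrace_diff diff_divide_distrib)

lemma t3_eq: "torsion3 n (Bform n) (\<lambda>X Y. 0) A B C = - Bform n (brk n A B) C"
  unfolding torsion3_def torsion_def by (simp add: Bform_uminus_left)

lemma Bform_assoc: "Bform n (brk n U C) D = Bform n U (brk n C D)"
  using Bform_brk_inv[of n C U D] brk_antisym[of n U C] Bform_uminus_left[of n "brk n C U" D] by simp

lemma jacobi: "brk n X (brk n Y Z) + brk n Y (brk n Z X) + brk n Z (brk n X Y) = 0"
  unfolding brk_def by (simp add: mmul_lin mmul_assoc)

lemma d3_zero: "d3 n (torsion3 n (Bform n) (\<lambda>X Y. 0)) X0 X1 X2 X3 = 0"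
proof -
  have e: "\<And>A B C D. Bform n (brk n (brk n A B) C) D = Bform n (brk n A B) (brk n C D)"
    using Bform_assoc by blast
  have s: "\<And>A B C D. Bform n (brk n A B) (brk n C D) = Bform n A (brk n B (brk n C D))"
    using Bform_assoc by blast
  have sy: "\<And>U V. Bform n U V = Bform n V U" using Bform_sym by blast
  have T1: "Bform n (brk n X1 X2) (brk n X0 X3) = Bform n (brk n X0 X3) (brk n X1 X2)" using sy by blast
  have T2: "Bform n (brk n X1 X3) (brk n X0 X2) = Bform n (brk n X0 X2) (brk n X1 X3)" using sy by blast
  have T3: "Bform n (brk n X2 X3) (brk n X0 X1) = Bform n (brk n X0 X1) (brk n X2 X3)" using sy by blast
  have J: "brk n X1 (brk n X2 X3) - brk n X2 (brk n X1 X3) + brk n X3 (brk n X1 X2) = 0"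
    using jacobi[of n X1 X2 X3] brk_antisym[of n X3 X1] by (simp add: brk_lin algebra_simps)
  have "Bform n X0 (brk n X1 (brk n X2 X3) - brk n X2 (brk n X1 X3) + brk n X3 (brk n X1 X2)) = 0"
    unfolding J Bform_def by simp
  then have K: "Bform n (brk n X0 X1) (brk n X2 X3) - Bform n (brk n X0 X2) (brk n X1 X3) + Bform n (brk n X0 X3) (brk n X1 X2) = 0"
    by (simp add: Bform_add_right Bform_diff_right s)
  show ?thesis
    unfolding d3_def t3_eq e T1 T2 T3
    using K by (simp add: algebra_simps)
qed


theorem mainTheorem3:
  fixes m :: nat
  assumes "1 < m"
  shows
    "(\<forall>X\<in>su_pq m (m - 1). \<forall>Y\<in>su_pq m (m - 1). Im (Bform (2*m - 1) X Y) = 0) \<and>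
     (\<forall>X\<in>su_pq m (m - 1). (\<forall>Y\<in>su_pq m (m - 1). Bform (2*m - 1) X Y = 0) \<longrightarrow> X = 0) \<and>
     (\<forall>X\<in>su_pq m (m - 1). \<forall>Y\<in>su_pq m (m - 1). \<forall>Z\<in>su_pq m (m - 1).
        Bform (2*m - 1) (brk (2*m - 1) X Y) Z = - Bform (2*m - 1) Y (brk (2*m - 1) X Z)) \<and>
     (\<exists>J1 J2 J3.
        hyper_paracomplex (2*m - 1) (su_pq m (m - 1)) J1 J2 J3 \<and>
        hyperparahermitian (su_pq m (m - 1)) (Bform (2*m - 1)) J1 J2 J3 \<and>
        HPKT_connection (2*m - 1) (su_pq m (m - 1)) (Bform (2*m - 1)) J1 J2 J3 (\<lambda>X Y. 0) \<and>
        flat_conn (2*m - 1) (su_pq m (m - 1)) (\<lambda>X Y. 0) \<and>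
        (\<forall>X\<in>su_pq m (m - 1). \<forall>Y\<in>su_pq m (m - 1). \<forall>Z\<in>su_pq m (m - 1).
           torsion3 (2*m - 1) (Bform (2*m - 1)) (\<lambda>X Y. 0) X Y Z
             = - Bform (2*m - 1) (brk (2*m - 1) X Y) Z) \<and>
        (\<forall>X0\<in>su_pq m (m - 1). \<forall>X1\<in>su_pq m (m - 1). \<forall>X2\<in>su_pq m (m - 1). \<forall>X3\<in>su_pq m (m - 1).
           d3 (2*m - 1) (torsion3 (2*m - 1) (Bform (2*m - 1)) (\<lambda>X Y. 0)) X0 X1 X2 X3 = 0))"
proof -
  obtain k where m: "m = Suc k" and k: "0 < k" using assms by (metis less_imp_Suc_add add_gr_0 zero_less_one)
  have n: "2*m - 1 = Suc (2*k)" using m by simp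
  have q: "m - 1 = k" using m by simp
  have s: "Suc k + k = Suc (2*k)" by simp
  have s': "Suc k + (Suc k - 1) = Suc (2*k)" "Suc k - 1 = k" by simp_all
  have L: "su_pq m (m - 1) = liealg (Suc (2*k)) (Ipq (Suc k) k)"
    unfolding m su_pq_liealg s' s ..
  have IpS: "Ipq (k+1) k = Ipq (Suc k) k" by simp
  let ?n = "Suc (2*k)"
  let ?L = "liealg (Suc (2*k)) (Ipq (Suc k) k)"
  obtain J1 J2 J3 where hp: "hyper_paracomplex ?n ?L J1 J2 J3" and hh: "hyperparahermitian ?L (Bform ?n) J1 J2 J3"
    using hyper_L[OF k] unfolding IpS by blast
  have lins: "lin_endo ?L J1" "lin_endo ?L J2" "lin_endo ?L J3"
    using hp unfolding hyper_paracomplex_def almost_hyper_paracomplex_def by auto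
  have z: "J1 0 = 0" "J2 0 = 0" "J3 0 = 0" using le_zero[OF refl] lins by blast+
  have B0: "\<And>Z. Bform ?n 0 Z = 0" "\<And>Z. Bform ?n Z 0 = 0" unfolding Bform_def by simp_all
  have part1: "\<forall>X\<in>?L. \<forall>Y\<in>?L. Im (Bform ?n X Y) = 0"
    using Bform_real[OF _ _ madj_Ip Ip_sq] by blast
  have part2: "\<forall>X\<in>?L. (\<forall>Y\<in>?L. Bform ?n X Y = 0) \<longrightarrow> X = 0"
    using nondeg[OF k] unfolding IpS by blast
  have part3: "\<forall>X\<in>?L. \<forall>Y\<in>?L. \<forall>Z\<in>?L. Bform ?n (brk ?n X Y) Z = - Bform ?n Y (brk ?n X Z)"
    using Bform_brk_inv by blast
  have hpkt: "HPKT_connection ?n ?L (Bform ?n) J1 J2 J3 (\<lambda>X Y. 0)"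
    unfolding HPKT_connection_def
  proof (intro conjI ballI)
    fix X Y assume "X \<in> ?L" "Y \<in> ?L"
    show "(0::cmat) \<in> ?L" using liealg_zero .
  next
    fix X Y Z assume "X \<in> ?L" "Y \<in> ?L" "Z \<in> ?L"
    show "Bform ?n 0 Z + Bform ?n Y 0 = 0" using B0 by simp
  next
    fix J X Y assume "J \<in> {J1, J2, J3}" "X \<in> ?L" "Y \<in> ?L"
    then show "0 - J 0 = (0::cmat)" using z by auto
  next
    fix X Y Z assume "X \<in> ?L" "Y \<in> ?L" "Z \<in> ?L"
    show "torsion3 ?n (Bform ?n) (\<lambda>X Y. 0) X Y Z = - torsion3 ?n (Bform ?n) (\<lambda>X Y. 0) Y X Z"
      unfolding t3_eq using Bform_brk_skew[of ?n X Y Z] by simp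
    show "torsion3 ?n (Bform ?n) (\<lambda>X Y. 0) X Y Z = - torsion3 ?n (Bform ?n) (\<lambda>X Y. 0) X Z Y"
      unfolding t3_eq using Bform_brk_inv[of ?n X Y Z] Bform_sym[of ?n Y "brk ?n X Z"] by simp
  qed
  have flat: "flat_conn ?n ?L (\<lambda>X Y. 0)"
    unfolding flat_conn_def curvature_def by simp
  have tor: "\<forall>X\<in>?L. \<forall>Y\<in>?L. \<forall>Z\<in>?L. torsion3 ?n (Bform ?n) (\<lambda>X Y. 0) X Y Z = - Bform ?n (brk ?n X Y) Z"
    using t3_eq by blast
  have dd: "\<forall>X0\<in>?L. \<forall>X1\<in>?L. \<forall>X2\<in>?L. \<forall>X3\<in>?L. d3 ?n (torsion3 ?n (Bform ?n) (\<lambda>X Y. 0)) X0 X1 X2 X3 = 0"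
    using d3_zero by blast
  show ?thesis unfolding n L
    using part1 part2 part3 hp hh hpkt flat tor dd by blast
qed


end
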